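(* Let $r,s$ be coprime nonzero integers with $r^2+4s\ne0$, let $\alpha,\beta$ be the roots of $x^2-rx-s=0$ with $|\alpha|\ge|\beta|$, and assume $\alpha/\beta$ is not a root of unity; put $U_n=\frac{\alpha^n-\beta^n}{\alpha-\beta}$, $V_n=\alpha^n+\beta^n$. Let $n$ be a positive integer, let $p<p_1$ be primes and let $t\ge0$, $h\ge1$, $h_1\ge1$ be integers. Let $n_0\in\{p^h,\ p^hp_1^{h_1}\}$ with $n_0>4$, $n_0\notin\{6,12\}$, and $n_0p^t\mid n$. Then: (a) if $n_0=p^h$, $$M_{n_0}(U_n)\ge \log\left|\frac{\alpha^n-\beta^n}{\alpha^{n/p^{t+1}}-\beta^{n/p^{t+1}}}\right|-(t+1)\log p;$$ (b) if $n_0=p^hp_1^{h_1}$, $$M_{n_0}(U_n)\ge \log\left(\left|\frac{\alpha^n-\beta^n}{\alpha^{n/p^{t+1}}-\beta^{n/p^{t+1}}}\right|\cdot\left|\frac{\alpha^{n/(p_1p^{t+1})}-\beta^{n/(p_1p^{t+1})}}{\alpha^{n/p_1}-\beta^{n/p_1}}\right|\right)-(t+1)\log P\!\left(\frac{n_0}{\gcd(n_0,3)}\right);$$ (c) if $n_0=p^h$ with $p>2$, $$M_{n_0}(V_n)\ge \log\left|\frac{\alpha^n+\beta^n}{\alpha^{n/p^{t+1}}+\beta^{n/p^{t+1}}}\right|-(t+1)\log p.$$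
   Context: For a positive integer $n_0$ and a nonzero integer $\ell$, $M_{n_0}(\ell)=\sum \nu_p\log p$, the sum over primes $p\equiv\pm1\pmod{n_0}$ with $p^{\nu_p}\,\|\,\ell$. $P(m)$ denotes the largest prime factor of the integer $m>1$. *)

theory Defs
  imports "HOL-Analysis.Analysis" "HOL-Number_Theory.Number_Theory"
begin

definition Mfun :: "nat \<Rightarrow> int \<Rightarrow> real" where
  "Mfun n0 l = (\<Sum>p\<in>{q \<in> prime_factors l. [q = 1] (mod int n0) \<or> [q = - 1] (mod int n0)}.
                   real (multiplicity p l) * ln (real_of_int p))"

definition Pmax :: "nat \<Rightarrow> nat" where
  "Pmax m = Max (prime_factors m)"

end

theory Submission
  imports Defs
begin


fun lu :: "int \<Rightarrow> int \<Rightarrow> nat \<Rightarrow> int" where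
  "lu P Q 0 = 0"
| "lu P Q (Suc 0) = 1"
| "lu P Q (Suc (Suc k)) = P * lu P Q (Suc k) - Q * lu P Q k"

lemma lu_closed:
  fixes x y :: complex
  assumes "x + y = of_int P" "x * y = of_int Q" "x \<noteq> y"
  shows "of_int (lu P Q k) = (x^k - y^k) / (x - y)"
proof (induction k rule: less_induct)
  case (less k)
  show ?case
  proof (cases k)
    case 0 then show ?thesis by simp
  next
    case (Suc j)
    show ?thesis
    proof (cases j)
      case 0 then show ?thesis using Suc assms by simp
    next
      case (Suc i)
      have h1: "of_int (lu P Q (Suc i)) = (x^(Suc i) - y^(Suc i)) / (x - y)"
        using less Suc \<open>k = Suc j\<close> by simp
      have h2: "of_int (lu P Q i) = (x^i - y^i) / (x - y)"
        using less Suc \<open>k = Suc j\<close> by simp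
      have "of_int (lu P Q k) = (x+y) * of_int (lu P Q (Suc i)) - x*y * of_int (lu P Q i)"
        using Suc \<open>k = Suc j\<close> assms by simp
      also have "\<dots> = (x^k - y^k) / (x - y)"
      proof -
        have "(x+y) * (x^(Suc i) - y^(Suc i)) - x*y*(x^i - y^i) = x^k - y^k"
          using Suc \<open>k = Suc j\<close> by (simp add: algebra_simps)
        then show ?thesis unfolding h1 h2
          by (metis (no_types, lifting) diff_divide_distrib times_divide_eq_right)
      qed
      finally show ?thesis .
    qed
  qed
qed

lemma choose3_id: "(k+3 choose 3) + (k+1 choose 3) = 2*(k+2 choose 3) + (k+1::nat)"
  by (simp add: numeral_3_eq_3 numeral_2_eq_2)


lemma lu_L1_aux:
  fixes P Q :: int
  defines "D \<equiv> P^2 - 4*Q"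
  shows "(\<exists>w. P^2 * 2^k * lu P Q (k+1) = int (k+1) * P^(k+2) + int ((k+1) choose 3) * P^k * D + D^2 * w)
       \<and> (\<exists>w. P^2 * 2^(k+1) * lu P Q (k+2) = int (k+2) * P^(k+3) + int ((k+2) choose 3) * P^(k+1) * D + D^2 * w)"
proof (induction k)
  case 0
  have "P^2 * 2^0 * lu P Q (0+1) = int (0+1) * P^(0+2) + int ((0+1) choose 3) * P^0 * D + D^2 * 0" by (simp add: power2_eq_square numeral_3_eq_3)
  moreover have "P^2 * 2^(0+1) * lu P Q (0+2) = int (0+2) * P^(0+3) + int ((0+2) choose 3) * P^(0+1) * D + D^2 * 0"
    by (simp add: numeral_2_eq_2 numeral_3_eq_3)
  ultimately show ?case by blast
next
  case (Suc k)
  from Suc obtain w0 w1 where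
    e0: "P^2 * 2^k * lu P Q (k+1) = int (k+1) * P^(k+2) + int ((k+1) choose 3) * P^k * D + D^2 * w0" and
    e1: "P^2 * 2^(k+1) * lu P Q (k+2) = int (k+2) * P^(k+3) + int ((k+2) choose 3) * P^(k+1) * D + D^2 * w1"
    by blast
  have rec: "P^2 * 2^(k+2) * lu P Q (k+3) = 2*P*(P^2 * 2^(k+1) * lu P Q (k+2)) - (P^2 - D)*(P^2*2^k*lu P Q (k+1))"
  proof -
    have "lu P Q (k+3) = P * lu P Q (k+2) - Q * lu P Q (k+1)"
      using lu.simps(3)[of P Q "k+1"] by (simp add: numeral_3_eq_3 numeral_2_eq_2)
    moreover have "\<And>B C. P^2*2^(k+2)*(P*B - Q*C) = 2*P*(P^2*2^(k+1)*B) - (P^2-(P^2-4*Q))*(P^2*2^k*C)"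
      by (simp add: algebra_simps power_add)
    ultimately show ?thesis unfolding D_def by metis
  qed
  have bin: "int ((k+3) choose 3) = 2 * int ((k+2) choose 3) - int ((k+1) choose 3) + int (k+1)"
    using choose3_id[of k] by linarith
  define a where "a = int ((k+1) choose 3)"
  define b where "b = int ((k+2) choose 3)"
  have pid: "\<And>X kk::int. 2*P*((kk+2)*(X*P^3) + b*(X*P)*D + D^2*w1) - (P^2-D)*((kk+1)*(X*P^2) + a*X*D + D^2*w0)
     = (kk+3)*(X*P^4) + (2*b - a + (kk+1))*(X*P^2)*D + D^2*(2*P*w1 - (P^2-D)*w0 + a*X)"
    by (simp add: algebra_simps power2_eq_square power3_eq_cube power4_eq_xxxx)
  define X where "X = P^k"
  have pw: "P^(k+2) = X*P^2" "P^(k+3) = X*P^3" "P^(k+4) = X*P^4" "P^(k+1) = X*P" "P^k = X"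
    unfolding X_def by (simp_all add: power_add power2_eq_square)
  have ik: "int (k+2) = int k + 2" "int (k+1) = int k + 1" "int (k+3) = int k + 3" by simp_all
  have e0': "P^2 * 2^k * lu P Q (k+1) = (int k + 1)*(X*P^2) + a*X*D + D^2*w0"
    using e0 unfolding a_def[symmetric] by (simp only: pw ik)
  have e1': "P^2 * 2^(k+1) * lu P Q (k+2) = (int k + 2)*(X*P^3) + b*(X*P)*D + D^2*w1"
    using e1 unfolding b_def[symmetric] by (simp only: pw ik)
  have "P^2 * 2^(k+2) * lu P Q (k+3) = (int k+3)*(X*P^4) + (2*b - a + (int k+1))*(X*P^2)*D + D^2*(2*P*w1 - (P^2-D)*w0 + a*X)"
    unfolding rec e0' e1' by (rule pid)
  then have "P^2 * 2^(k+2) * lu P Q (k+3) = int (k+3) * P^(k+4) + int ((k+3) choose 3) * P^(k+2) * D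
        + D^2 * (2*P*w1 - (P^2-D)*w0 + a * P^k)"
    unfolding bin a_def[symmetric] b_def[symmetric] by (simp only: pw ik)
  then have E2: "\<exists>w. P^2 * 2^(k+2) * lu P Q (k+3) = int (k+3) * P^(k+4) + int ((k+3) choose 3) * P^(k+2) * D + D^2 * w"
    by blast
  have nn: "Suc k + 1 = k + 2" "Suc k + 2 = k + 3" "Suc k + 3 = k + 4" by simp_all
  show ?case unfolding nn using Suc E2 by simp
qed


lemma lu_L1:
  "\<exists>w. P^2 * 2^k * lu P Q (k+1) = int (k+1) * P^(k+2) + int ((k+1) choose 3) * P^k * (P^2-4*Q) + (P^2-4*Q)^2 * w"
  using lu_L1_aux[where P=P and Q=Q and k=k] by blast

lemma dvd_diff_iff_right: "(a::int) dvd x \<Longrightarrow> a dvd x - y \<longleftrightarrow> a dvd y"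
  using dvd_add_right_iff[of a x "-y"] by simp

lemma prime_dvd_two_int: "prime (q::int) \<Longrightarrow> q dvd 2 \<Longrightarrow> q = 2"
  using prime_ge_2_int[of q] zdvd_imp_le[of q 2] by simp

lemma prime_dvd_pow2_int: "prime (q::int) \<Longrightarrow> q dvd 2^j \<Longrightarrow> q = 2"
  using prime_dvd_power prime_dvd_two_int by blast

lemma odd_prime_not_dvd_P:
  assumes "prime (q::int)" "q \<noteq> 2" "q dvd P^2 - 4*Q" "\<not> q dvd Q"
  shows "\<not> q dvd P"
proof
  assume "q dvd P"
  then have "q dvd P^2" using dvd_mult2[of q P P] by (simp add: power2_eq_square)
  then have "q dvd P^2 - (P^2 - 4*Q)" using assms(3) by (rule dvd_diff)
  then have "q dvd 2^2 * Q" by simp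
  then have "q dvd 2^2 \<or> q dvd Q" using assms(1) prime_dvd_mult_iff by blast
  then show False using assms prime_dvd_pow2_int by blast
qed

lemma lu_dvd_iff_D:
  assumes q: "prime (q::int)" and qD: "q dvd P^2 - 4*Q" and qQ: "\<not> q dvd Q"
  shows "q dvd lu P Q k \<longleftrightarrow> q dvd int k"
proof (cases "q = 2")
  case True
  have "2 dvd (P^2 - 4*Q) + 4*Q" using qD True by (intro dvd_add) simp_all
  then have "2 dvd P^2" by simp
  then have P2: "2 dvd P" by simp
  have Q2: "\<not> 2 dvd Q" using qQ True by simp
  have "2 dvd lu P Q k \<longleftrightarrow> 2 dvd int k"
  proof (induction k rule: less_induct)
    case (less k)
    show ?case
    proof (cases k)
      case 0 then show ?thesis by simp
    next
      case (Suc j)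
      show ?thesis
      proof (cases j)
        case 0 then show ?thesis using Suc by simp
      next
        case (Suc i)
        have ih: "2 dvd lu P Q i \<longleftrightarrow> 2 dvd int i" using less Suc \<open>k = Suc j\<close> by simp
        have e: "lu P Q k = P * lu P Q (Suc i) - Q * lu P Q i" using Suc \<open>k = Suc j\<close> by simp
        have "2 dvd lu P Q k \<longleftrightarrow> 2 dvd Q * lu P Q i"
          unfolding e using P2 by (intro dvd_diff_iff_right) simp
        also have "\<dots> \<longleftrightarrow> 2 dvd lu P Q i" using Q2 by auto
        also have "\<dots> \<longleftrightarrow> 2 dvd int k" using ih Suc \<open>k = Suc j\<close> by simp
        finally show ?thesis .
      qed
    qed
  qed
  then show ?thesis using True by simp
next
  case False
  have nP: "\<not> q dvd P" using odd_prime_not_dvd_P[OF q False qD qQ] .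
  show ?thesis
  proof (cases k)
    case 0 then show ?thesis by simp
  next
    case (Suc j)
    obtain w where w: "P^2 * 2^j * lu P Q (j+1) = int (j+1) * P^(j+2) + int ((j+1) choose 3) * P^j * (P^2-4*Q) + (P^2-4*Q)^2 * w"
      using lu_L1 by blast
    have d1: "q dvd int ((j+1) choose 3) * P^j * (P^2-4*Q) + (P^2-4*Q)^2 * w"
      using qD by (simp add: power2_eq_square)
    have n1: "\<not> q dvd P^2" using nP q prime_dvd_power by blast
    have n2: "\<not> q dvd 2^j" using False q prime_dvd_pow2_int by blast
    have n3: "\<not> q dvd P^(j+2)" using nP q prime_dvd_power by blast
    have "q dvd lu P Q k \<longleftrightarrow> q dvd P^2 * 2^j * lu P Q (j+1)"
      using n1 n2 q Suc by (simp add: prime_dvd_mult_iff)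
    also have "\<dots> \<longleftrightarrow> q dvd int (j+1) * P^(j+2)"
      unfolding w add.assoc by (rule dvd_add_left_iff[OF d1])
    also have "\<dots> \<longleftrightarrow> q dvd int k"
      using n3 q Suc by (simp add: prime_dvd_mult_iff del: of_nat_Suc)
    finally show ?thesis .
  qed
qed


lemma lu_lift:
  assumes q: "prime (q::int)" and q2: "q \<noteq> 2" and qD: "q dvd P^2 - 4*Q" and qQ: "\<not> q dvd Q"
    and h: "q \<ge> 5 \<or> q^2 dvd P^2 - 4*Q"
  shows "q dvd lu P Q (nat q) \<and> \<not> q^2 dvd lu P Q (nat q)"
proof -
  define D where "D = P^2 - 4*Q"
  have q3: "q \<ge> 3" using prime_ge_2_int[OF q] q2 by simp
  define j where "j = nat q - 1"
  have jq: "j + 1 = nat q" "int (j+1) = q" using q3 unfolding j_def by simp_all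
  obtain w where w: "P^2 * 2^j * lu P Q (j+1) = int (j+1) * P^(j+2) + int ((j+1) choose 3) * P^j * D + D^2 * w"
    using lu_L1 unfolding D_def by blast
  have nP: "\<not> q dvd P" using odd_prime_not_dvd_P[OF q q2 qD qQ] .
  have qD': "q dvd D" using qD unfolding D_def .
  have d2: "q^2 dvd D^2" using qD' by (simp add: power2_eq_square mult_dvd_mono)
  have dC: "q^2 dvd int ((j+1) choose 3) * P^j * D"
  proof (cases "q \<ge> 5")
    case True
    have "nat q dvd (nat q choose 3)"
      by (rule dvd_choose_prime) (use True q in \<open>auto simp: prime_int_iff nat_less_iff\<close>)
    then have "int (nat q) dvd int (nat q choose 3)" by (simp only: of_nat_dvd_iff)
    then have "q dvd int ((j+1) choose 3)" using q3 jq by simp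
    then have "q * q dvd int ((j+1) choose 3) * D" using qD' by (rule mult_dvd_mono)
    then have "q * q dvd int ((j+1) choose 3) * D * P^j" by (rule dvd_mult2)
    then show ?thesis by (simp add: power2_eq_square mult.commute mult.left_commute)
  next
    case False
    then have "q^2 dvd D" using h unfolding D_def by simp
    then show ?thesis by simp
  qed
  have R: "q^2 dvd int ((j+1) choose 3) * P^j * D + D^2 * w" using dC d2 by simp
  have n1: "\<not> q dvd P^2" using nP q prime_dvd_power by blast
  have n2: "\<not> q dvd 2^j" using q2 q prime_dvd_pow2_int by blast
  have n3: "\<not> q dvd P^(j+2)" using nP q prime_dvd_power by blast
  have e: "P^2 * 2^j * lu P Q (j+1) = q * P^(j+2) + (int ((j+1) choose 3) * P^j * D + D^2 * w)"
    using w by (simp only: jq(2) add.assoc)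
  have R1: "q dvd int ((j+1) choose 3) * P^j * D + D^2 * w"
    using R by (rule dvd_trans[rotated]) (simp add: power2_eq_square)
  have "q dvd P^2 * 2^j * lu P Q (j+1)" unfolding e using R1 by simp
  then have A: "q dvd lu P Q (j+1)" using n1 n2 q by (simp add: prime_dvd_mult_iff)
  have B: "\<not> q^2 dvd lu P Q (j+1)"
  proof
    assume "q^2 dvd lu P Q (j+1)"
    then have "q^2 dvd P^2 * 2^j * lu P Q (j+1)" by simp
    then have "q^2 dvd q * P^(j+2)" unfolding e using R by (simp add: dvd_add_left_iff)
    then have "q * q dvd q * P^(j+2)" by (simp add: power2_eq_square)
    then have "q dvd P^(j+2)" using q3 by simp
    then show False using n3 by simp
  qed
  show ?thesis using A B unfolding jq(1) by simp
qed


lemma pow_diff_neg: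
  fixes d :: complex
  assumes "d^2 = of_int D"
  shows "d^i - (-d)^i = (if odd i then 2 * d * of_int D ^ (i div 2) else 0)"
proof (cases "odd i")
  case True
  have "d^i = d * (d^2)^(i div 2)"
    using True by (metis odd_two_times_div_two_succ power_Suc power_mult add.commute Suc_eq_plus1)
  then show ?thesis using True assms by simp
next
  case False then show ?thesis by simp
qed

definition Sb :: "int \<Rightarrow> int \<Rightarrow> nat \<Rightarrow> int" where
  "Sb P D k = (\<Sum>i\<in>{i\<in>{..k}. odd i}. int (k choose i) * P^(k-i) * D^(i div 2))"

lemma lu_binom:
  assumes D: "P^2 - 4*Q \<noteq> 0"
  shows "2^k * lu P Q k = 2 * Sb P (P^2 - 4*Q) k"
proof -
  define D where "D = P^2 - 4*Q"
  define d where "d = csqrt (of_int D)"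
  have d2: "d^2 = of_int D" unfolding d_def by simp
  have "of_int D \<noteq> (0::complex)" using D unfolding D_def of_int_eq_0_iff by simp
  then have dnz: "d \<noteq> 0" using d2 by auto
  define x where "x = (of_int P + d) / 2"
  define y where "y = (of_int P - d) / 2"
  have xy1: "x + y = of_int P" unfolding x_def y_def by (simp add: field_simps)
  have "x * y = (of_int P ^ 2 - d^2) / 4" unfolding x_def y_def by (simp add: field_simps power2_eq_square)
  also have "\<dots> = of_int Q" unfolding d2 D_def by simp
  finally have xy2: "x * y = of_int Q" .
  have xy3: "x \<noteq> y" using dnz unfolding x_def y_def by (simp add: field_simps)
  have xmy: "x - y = d" unfolding x_def y_def by (simp add: field_simps)
  have cl: "of_int (lu P Q k) = (x^k - y^k) / d" using lu_closed[OF xy1 xy2 xy3] xmy by simp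
  have "(2::complex)^k * (x^k - y^k) = (d + of_int P)^k - (-d + of_int P)^k"
    unfolding x_def y_def by (simp add: power_divide field_simps)
  also have "\<dots> = (\<Sum>i\<le>k. of_nat (k choose i) * d^i * of_int P^(k-i)) - (\<Sum>i\<le>k. of_nat (k choose i) * (-d)^i * of_int P^(k-i))"
    by (simp only: binomial_ring)
  also have "\<dots> = (\<Sum>i\<le>k. of_nat (k choose i) * (d^i - (-d)^i) * of_int P^(k-i))"
    by (simp add: sum_subtractf algebra_simps)
  also have "\<dots> = (\<Sum>i\<le>k. if odd i then 2 * d * (of_nat (k choose i) * of_int P^(k-i) * of_int D ^ (i div 2)) else 0)"
    by (intro sum.cong refl) (simp add: pow_diff_neg[OF d2])
  also have "\<dots> = (\<Sum>i\<in>{i\<in>{..k}. odd i}. 2 * d * (of_nat (k choose i) * of_int P^(k-i) * of_int D ^ (i div 2)))"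
    by (simp only: sum.inter_filter[OF finite_atMost])
  also have "\<dots> = 2 * d * of_int (Sb P D k)"
    unfolding Sb_def by (simp add: sum_distrib_left)
  finally have fin: "(2::complex)^k * (x^k - y^k) = 2 * d * of_int (Sb P D k)" .
  have "of_int (2^k * lu P Q k) = (2::complex)^k * (x^k - y^k) / d" using cl by simp
  also have "\<dots> = 2 * d * of_int (Sb P D k) / d" by (simp only: fin)
  also have "\<dots> = (of_int (2 * Sb P D k) :: complex)" using dnz by simp
  finally have "of_int (2^k * lu P Q k) = (of_int (2 * Sb P D k) :: complex)" .
  then show ?thesis unfolding D_def by (simp only: of_int_eq_iff)
qed


lemma Sb_p:
  assumes p: "prime p" "p > 2"
  shows "int p dvd Sb P D p - D^((p-1) div 2)"
proof -
  have op: "odd p" using p prime_odd_nat by blast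
  have A: "{i\<in>{..p}. odd i} = insert p {i\<in>{..<p}. odd i}" using op by auto
  have "Sb P D p = int (p choose p) * P^(p-p) * D^(p div 2) + (\<Sum>i\<in>{i\<in>{..<p}. odd i}. int (p choose i) * P^(p-i) * D^(i div 2))"
    unfolding Sb_def A by (subst sum.insert) auto
  also have "p div 2 = (p-1) div 2" using op by (elim oddE) simp
  finally have e: "Sb P D p - D^((p-1) div 2) = (\<Sum>i\<in>{i\<in>{..<p}. odd i}. int (p choose i) * P^(p-i) * D^(i div 2))"
    by simp
  have "int p dvd (\<Sum>i\<in>{i\<in>{..<p}. odd i}. int (p choose i) * P^(p-i) * D^(i div 2))"
  proof (rule dvd_sum)
    fix i assume "i \<in> {i\<in>{..<p}. odd i}"
    then have "i < p" "i \<noteq> 0" by (auto elim: oddE)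
    then have "p dvd (p choose i)" using p by (intro dvd_choose_prime) auto
    then have "int p dvd int (p choose i)" by simp
    then show "int p dvd int (p choose i) * P^(p-i) * D^(i div 2)" by (simp add: mult.assoc)
  qed
  then show ?thesis unfolding e .
qed

lemma Sb_p1:
  assumes p: "prime p" "p > 2"
  shows "int p dvd Sb P D (p+1) - (P^p + P * D^((p-1) div 2))"
proof -
  have op: "odd p" using p prime_odd_nat by blast
  define M where "M = {i\<in>{2..<p}. odd i}"
  have A: "{i\<in>{..p+1}. odd i} = insert 1 (insert p M)"
    using op p(2) unfolding M_def set_eq_iff by (simp only: mem_Collect_eq insert_iff atMost_iff atLeastLessThan_iff) presburger
  have n1: "1 \<notin> insert p M" using p(2) unfolding M_def by auto
  have n2: "p \<notin> M" unfolding M_def by auto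
  have pd: "p div 2 = (p-1) div 2" using op by (elim oddE) simp
  have "Sb P D (p+1) = int ((p+1) choose 1) * P^(p+1-1) * D^(1 div 2)
      + (int ((p+1) choose p) * P^(p+1-p) * D^(p div 2)
      + (\<Sum>i\<in>M. int ((p+1) choose i) * P^(p+1-i) * D^(i div 2)))"
    unfolding Sb_def A using n1 n2 by (simp add: sum.insert M_def)
  also have "\<dots> = int (p+1) * P^p + (int (p+1) * P * D^((p-1) div 2) + (\<Sum>i\<in>M. int ((p+1) choose i) * P^(p+1-i) * D^(i div 2)))"
    using pd by (simp add: binomial_Suc_n)
  finally have e: "Sb P D (p+1) - (P^p + P * D^((p-1) div 2)) = int p * (P^p + P * D^((p-1) div 2)) + (\<Sum>i\<in>M. int ((p+1) choose i) * P^(p+1-i) * D^(i div 2))"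
    by (simp add: algebra_simps)
  have "int p dvd (\<Sum>i\<in>M. int ((p+1) choose i) * P^(p+1-i) * D^(i div 2))"
  proof (rule dvd_sum)
    fix i assume "i \<in> M"
    then have i: "i < p" "2 \<le> i" unfolding M_def by auto
    define j where "j = i - 1"
    have j: "i = Suc j" "j \<noteq> 0" "j < p" using i unfolding j_def by auto
    have "(p+1) choose i = (p choose j) + (p choose i)" using j by simp
    moreover have "p dvd (p choose j)" using p j by (intro dvd_choose_prime) auto
    moreover have "p dvd (p choose i)" using p i by (intro dvd_choose_prime) auto
    ultimately have "p dvd ((p+1) choose i)" by simp
    then have "int p dvd int ((p+1) choose i)" by simp
    then show "int p dvd int ((p+1) choose i) * P^(p+1-i) * D^(i div 2)" by (simp add: mult.assoc)
  qed
  then show ?thesis unfolding e by simp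
qed


lemma fermat_int:
  assumes p: "prime p"
  shows "int p dvd a^p - a"
proof (cases "int p dvd a")
  case True
  have "p > 0" using p prime_gt_0_nat by blast
  then have "int p dvd a^p" using True dvd_trans dvd_power[of p a] by blast
  then show ?thesis using True by (rule dvd_diff)
next
  case False
  define b where "b = nat (a mod int p)"
  have pp: "int p > 0" using p prime_gt_0_nat by simp
  have bi: "int b = a mod int p" unfolding b_def using pp by simp
  have nb: "\<not> p dvd b"
  proof
    assume "p dvd b"
    then have "int p dvd a mod int p" using bi by (metis of_nat_dvd_iff)
    then show False using False by (simp add: dvd_mod_iff)
  qed
  have "[b^(p-1) = 1] (mod p)" using fermat_theorem[OF p nb] .
  then have "[b^(p-1) * b = 1 * b] (mod p)" by (rule cong_mult) simp
  moreover have "b^(p-1) * b = b^p" using p prime_gt_0_nat by (simp add: power_Suc2[symmetric])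
  ultimately have "[b^p = b] (mod p)" by simp
  then have "[int b ^ p = int b] (mod int p)" by (simp add: cong_int_iff[symmetric])
  moreover have bc: "[int b = a] (mod int p)" unfolding bi cong_def by simp
  ultimately have "[a ^ p = a] (mod int p)"
    by (meson cong_pow cong_sym cong_trans)
  then show ?thesis by (simp add: cong_iff_dvd_diff)
qed

lemma lu_appear:
  assumes p: "prime p" "p > 2" and nQ: "\<not> int p dvd Q" and nD: "\<not> int p dvd P^2 - 4*Q"
  shows "int p dvd lu P Q (p-1) \<or> int p dvd lu P Q (p+1)"
proof -
  define D where "D = P^2 - 4*Q"
  define e where "e = D^((p-1) div 2)"
  have Dnz: "P^2 - 4*Q \<noteq> 0" using nD by auto
  have ps: "p = Suc (p-1)" using p by simp
  have b1: "2^p * lu P Q p = 2 * Sb P D p" using lu_binom[OF Dnz] unfolding D_def .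
  have X: "2^(p-1) * lu P Q p = Sb P D p"
  proof -
    have "2 * (2^(p-1) * lu P Q p) = 2 * Sb P D p" using b1 ps by (metis power_Suc mult.assoc)
    then show ?thesis by simp
  qed
  have b2: "2^(p+1) * lu P Q (p+1) = 2 * Sb P D (p+1)" using lu_binom[OF Dnz] unfolding D_def .
  have Y: "2^p * lu P Q (p+1) = Sb P D (p+1)" using b2 by (simp add: mult.assoc)
  have c1: "int p dvd 2^(p-1) * lu P Q p - e" unfolding X e_def using Sb_p[OF p] .
  have c2: "int p dvd 2^p * lu P Q (p+1) - (P^p + P * e)" unfolding Y e_def using Sb_p1[OF p] .
  have F: "int p dvd P^p - P" using fermat_int[OF p(1)] .
  have pnot2: "\<not> int p dvd 2^p"
  proof
    assume "int p dvd 2^p"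
    moreover have "prime (int p)" using p by simp
    ultimately have "int p = 2" using prime_dvd_pow2_int by blast
    then show False using p by simp
  qed
  have eu: "[Legendre D (int p) = e] (mod int p)" unfolding e_def using euler_criterion[OF p] .
  have "\<not> [D = 0] (mod int p)" using nD unfolding D_def by (simp add: cong_0_iff)
  then have "Legendre D (int p) = 1 \<or> Legendre D (int p) = -1" unfolding Legendre_def by auto
  then have "int p dvd e - 1 \<or> int p dvd e + 1"
    using eu by (auto simp: cong_iff_dvd_diff dvd_diff_commute)
  then show ?thesis
  proof
    assume h: "int p dvd e + 1"
    have eq: "2^p * lu P Q (p+1) = (2^p * lu P Q (p+1) - (P^p + P * e)) + (P^p - P) + P * (e + 1)"
      by (simp add: algebra_simps)
    have "int p dvd (2^p * lu P Q (p+1) - (P^p + P * e)) + (P^p - P) + P * (e + 1)"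
      by (intro dvd_add dvd_mult c2 F h)
    then have "int p dvd 2^p * lu P Q (p+1)" by (subst eq)
    then have "int p dvd lu P Q (p+1)" using pnot2 p by (simp add: prime_dvd_mult_iff)
    then show ?thesis by simp
  next
    assume h: "int p dvd e - 1"
    have rec: "lu P Q (p+1) = P * lu P Q p - Q * lu P Q (p-1)"
      using lu.simps(3)[of P Q "p-1"] ps by simp
    have q1: "Q * lu P Q (p-1) = P * lu P Q p - lu P Q (p+1)" using rec by simp
    have tp: "(2::int)^p = 2 * 2^(p-1)" using power_Suc[of "2::int" "p-1"] ps by simp
    have "2^p * Q * lu P Q (p-1) = 2^p * (P * lu P Q p - lu P Q (p+1))" unfolding q1[symmetric] by (simp add: mult.assoc)
    also have "\<dots> = 2*P*(2^(p-1) * lu P Q p) - 2^p * lu P Q (p+1)"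
      by (simp add: right_diff_distrib tp mult_ac)
    also have "\<dots> = 2*P*(2^(p-1) * lu P Q p - e) + P*(e-1) - (2^p * lu P Q (p+1) - (P^p + P * e)) - (P^p - P)"
      by (simp add: algebra_simps)
    finally have ee: "2^p * Q * lu P Q (p-1) = 2*P*(2^(p-1) * lu P Q p - e) + P*(e-1) - (2^p * lu P Q (p+1) - (P^p + P * e)) - (P^p - P)" .
    have "int p dvd 2*P*(2^(p-1) * lu P Q p - e) + P*(e-1) - (2^p * lu P Q (p+1) - (P^p + P * e)) - (P^p - P)"
      by (intro dvd_diff dvd_add dvd_mult c1 c2 h F)
    then have "int p dvd 2^p * Q * lu P Q (p-1)" unfolding ee .
    then have "int p dvd lu P Q (p-1)" using pnot2 nQ p by (simp add: prime_dvd_mult_iff)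
    then show ?thesis by simp
  qed
qed


lemma div_sq_aux: "(z::complex) \<noteq> 0 \<Longrightarrow> (A*B - w*C*E)/z^2 = (A/z)*(B/z) - w*(C/z)*(E/z)"
  by (simp add: field_simps power2_eq_square)

locale lucas =
  fixes r s :: int and a b :: complex and U V :: "nat \<Rightarrow> int"
  assumes cop: "coprime r s" and rnz: "r \<noteq> 0" and snz: "s \<noteq> 0" and Dnz: "r^2 + 4 * s \<noteq> 0"
    and sum_ab: "a + b = of_int r" and prod_ab: "a * b = - of_int s"
    and nroot: "\<forall>k::nat. k > 0 \<longrightarrow> (a/b)^k \<noteq> 1"
    and Uc: "\<forall>m. complex_of_int (U m) = (a^m - b^m)/(a - b)"
    and Vc: "\<forall>m. complex_of_int (V m) = a^m + b^m"
begin

lemma anz: "a \<noteq> 0" and bnz: "b \<noteq> 0"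
  using prod_ab snz by auto

lemma amb2: "(a - b)^2 = of_int (r^2 + 4 * s)"
proof -
  have "(a - b)^2 = (a+b)^2 - 4*(a*b)" by (simp add: power2_eq_square algebra_simps)
  then show ?thesis unfolding sum_ab prod_ab by simp
qed

lemma ab: "a \<noteq> b"
proof
  assume "a = b"
  then have "(a-b)^2 = 0" by simp
  then have "of_int (r^2 + 4 * s) = (0::complex)" using amb2 by simp
  then show False using Dnz by (simp only: of_int_eq_0_iff)
qed

lemma U_lu: "U k = lu r (-s) k"
proof -
  have "complex_of_int (lu r (-s) k) = (a^k - b^k)/(a - b)"
    using lu_closed[of a b r "-s"] sum_ab prod_ab ab by simp
  then show ?thesis using Uc by (metis of_int_eq_iff)
qed

lemma powne: "k > 0 \<Longrightarrow> a^k \<noteq> b^k"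
proof
  assume "k > 0" "a^k = b^k"
  then have "(a/b)^k = 1" using bnz by (simp add: power_divide)
  then show False using nroot \<open>k > 0\<close> by blast
qed

lemma U_nz: "k > 0 \<Longrightarrow> U k \<noteq> 0"
proof
  assume "k > 0" "U k = 0"
  then have "(a^k - b^k)/(a - b) = 0" using Uc by (metis of_int_0)
  then show False using powne[OF \<open>k > 0\<close>] ab by simp
qed

lemma V_nz: "V k \<noteq> 0"
proof
  assume "V k = 0"
  then have h: "a^k + b^k = 0" using Vc by (metis of_int_0)
  show False
  proof (cases "k = 0")
    case True then show False using h by simp
  next
    case False
    have "a^k = -(b^k)" using h by (simp add: eq_neg_iff_add_eq_0)
    then have "(a^k)^2 = (b^k)^2" by simp
    then have "a^(2*k) = b^(2*k)" by (simp add: power_mult[symmetric] mult.commute)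
    then show False using powne[of "2*k"] False by simp
  qed
qed

lemma UV: "U (2*k) = U k * V k"
proof -
  have p2: "a^(2*k) = a^k*a^k" "b^(2*k) = b^k*b^k" by (simp_all only: mult_2 power_add)
  have e: "a^(2*k) - b^(2*k) = (a^k - b^k)*(a^k + b^k)"
    unfolding p2 by (simp add: algebra_simps)
  have "complex_of_int (U (2*k)) = (a^k - b^k)/(a-b) * (a^k + b^k)"
    using Uc e by simp
  also have "\<dots> = of_int (U k * V k)" using Uc Vc by simp
  finally show ?thesis by (simp only: of_int_eq_iff)
qed

lemma U_derived: "U (m*k) = U m * lu (V m) ((-s)^m) k"
proof (cases "m = 0")
  case True then show ?thesis using U_lu by simp
next
  case False
  have x1: "a^m + b^m = of_int (V m)" using Vc by simp
  have x2: "a^m * b^m = of_int ((-s)^m)" using prod_ab by (simp add: power_mult_distrib[symmetric])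
  have x3: "a^m \<noteq> b^m" using powne False by simp
  have L: "complex_of_int (lu (V m) ((-s)^m) k) = ((a^m)^k - (b^m)^k)/(a^m - b^m)"
    using lu_closed[OF x1 x2 x3] .
  have "complex_of_int (U (m*k)) = of_int (U m) * of_int (lu (V m) ((-s)^m) k)"
    unfolding L using Uc x3 ab by (simp add: power_mult)
  then show ?thesis by (metis of_int_eq_iff of_int_mult)
qed

lemma derived_disc: "(V m)^2 - 4*(-s)^m = (r^2 + 4 * s) * (U m)^2"
proof -
  have "complex_of_int ((V m)^2 - 4*(-s)^m) = (a^m + b^m)^2 - 4*(a*b)^m"
    using Vc prod_ab by simp
  also have "\<dots> = (a^m - b^m)^2" by (simp add: power2_eq_square power_mult_distrib algebra_simps)
  also have "\<dots> = (a - b)^2 * ((a^m - b^m)/(a-b))^2" using ab by (simp add: power_divide)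
  also have "\<dots> = of_int ((r^2 + 4 * s) * (U m)^2)" using amb2 Uc by simp
  finally show ?thesis by (metis of_int_eq_iff)
qed

lemma V_double: "V (2*m) = (V m)^2 - 2*(-s)^m"
proof -
  have p2: "a^(2*m) = a^m*a^m" "b^(2*m) = b^m*b^m" "(a*b)^m = a^m*b^m" by (simp_all only: mult_2 power_add power_mult_distrib)
  have e: "a^(2*m) + b^(2*m) = (a^m + b^m)^2 - 2*(a*b)^m"
    unfolding p2 by (simp add: power2_eq_square algebra_simps)
  have "complex_of_int (V (2*m)) = (a^m + b^m)^2 - 2*(a*b)^m" using Vc e by simp
  also have "\<dots> = of_int ((V m)^2 - 2*(-s)^m)" using Vc prod_ab by simp
  finally show ?thesis by (simp only: of_int_eq_iff)
qed

lemma U_add: "U (x + 1 + y) = U (x+1) * U (y+1) + s * U x * U y"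
proof -
  have e: "complex_of_int s = - (a*b)" using prod_ab by simp
  have n: "(a^(x+1+y) - b^(x+1+y)) * (a - b) = (a^(x+1) - b^(x+1)) * (a^(y+1) - b^(y+1)) - (a*b) * (a^x - b^x) * (a^y - b^y)"
    by (simp add: algebra_simps power_add)
  have amb: "a - b \<noteq> 0" using ab by simp
  have "complex_of_int (U (x + 1 + y)) = (a^(x+1+y) - b^(x+1+y)) * (a - b) / (a-b)^2"
    using Uc amb by (simp add: power2_eq_square)
  also have "\<dots> = ((a^(x+1) - b^(x+1)) * (a^(y+1) - b^(y+1)) - (a*b) * (a^x - b^x) * (a^y - b^y)) / (a-b)^2"
    by (simp only: n)
  also have "\<dots> = ((a^(x+1) - b^(x+1))/(a-b)) * ((a^(y+1) - b^(y+1))/(a-b)) - (a*b) * ((a^x - b^x)/(a-b)) * ((a^y - b^y)/(a-b))"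
    using amb by (rule div_sq_aux)
  also have "\<dots> = of_int (U (x+1) * U (y+1) + s * U x * U y)"
    using Uc e by simp
  finally show ?thesis by (simp only: of_int_eq_iff)
qed


lemma U_0: "U 0 = 0" and U_1: "U 1 = 1" using U_lu by simp_all

lemma U_rec: "U (k+2) = r * U (k+1) + s * U k"
  using U_lu by (simp add: numeral_2_eq_2)

lemma U_mod_s: "q dvd s \<Longrightarrow> q dvd U (k+1) - r^k"
proof (induction k rule: less_induct)
  case (less k)
  show ?case
  proof (cases k)
    case 0 then show ?thesis using U_1 by simp
  next
    case (Suc j)
    show ?thesis
    proof (cases j)
      case 0 then show ?thesis using Suc U_lu by simp
    next
      case (Suc i)
      have ih: "q dvd U (i+1+1) - r^(i+1)" using less.IH[of "i+1"] less.prems Suc \<open>k = Suc j\<close> by simp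
      have e: "U (k+1) - r^k = r * (U (i+1+1) - r^(i+1)) + s * U (i+1)"
        using U_rec[of "i+1"] Suc \<open>k = Suc j\<close> by (simp add: algebra_simps numeral_2_eq_2)
      show ?thesis unfolding e by (rule dvd_add[OF dvd_mult[OF ih] dvd_mult2[OF less.prems]])
    qed
  qed
qed

lemma not_dvd_s:
  assumes q: "prime (q::int)" and k: "k > 0" and d: "q dvd U k"
  shows "\<not> q dvd s"
proof
  assume qs: "q dvd s"
  define j where "j = k - 1"
  have j: "k = j + 1" using k unfolding j_def by simp
  have h1: "q dvd U (j+1) - r^j" using U_mod_s[OF qs] .
  have h2: "q dvd U (j+1)" using d j by simp
  have "q dvd U (j+1) - (U (j+1) - r^j)" by (rule dvd_diff[OF h2 h1])
  then have "q dvd r^j" by simp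
  show False
  proof (cases "j = 0")
    case True
    then show False using \<open>q dvd r^j\<close> prime_gt_1_int[OF q] by simp
  next
    case False
    then have "q dvd r" using \<open>q dvd r^j\<close> q prime_dvd_power by blast
    then have "is_unit q" using cop qs coprime_common_divisor by blast
    then show False using prime_gt_1_int[OF q] by simp
  qed
qed

lemma consec:
  assumes q: "prime (q::int)" and qs: "\<not> q dvd s"
  shows "\<not> (q dvd U c \<and> q dvd U (c+1))"
proof (induction c)
  case 0 then show ?case using U_1 prime_gt_1_int[OF q] by (auto simp: zdvd1_eq)
next
  case (Suc c)
  show ?case
  proof
    assume h: "q dvd U (Suc c) \<and> q dvd U (Suc c + 1)"
    have "U (Suc c + 1) = r * U (c+1) + s * U c" using U_rec[of c] by simp
    moreover have "q dvd r * U (c+1)" using h by simp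
    ultimately have "q dvd U (Suc c + 1) - r * U (c+1)" using h by (intro dvd_diff) simp_all
    then have "q dvd s * U c" using \<open>U (Suc c + 1) = r * U (c+1) + s * U c\<close> by simp
    then have "q dvd U c" using q qs by (simp add: prime_dvd_mult_iff)
    then show False using Suc h by simp
  qed
qed

lemma U_dvd: "U m dvd U (m*k)"
  using U_derived by simp

lemma rank:
  assumes q: "prime (q::int)" and k0: "k0 > 0" "q dvd U k0"
  shows "\<exists>z>0. \<forall>k. q dvd U k \<longleftrightarrow> z dvd k"
proof -
  have qs: "\<not> q dvd s" using not_dvd_s[OF q k0] .
  define z where "z = (LEAST k. 0 < k \<and> q dvd U k)"
  have zp: "0 < z \<and> q dvd U z" unfolding z_def by (rule LeastI[of _ k0]) (use k0 in simp)
  have zmin: "\<not> q dvd U j" if "0 < j" "j < z" for j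
    using not_less_Least[of j "\<lambda>k. 0 < k \<and> q dvd U k"] that unfolding z_def by blast
  have "q dvd U k \<longleftrightarrow> z dvd k" for k
  proof
    assume "z dvd k"
    then obtain m where "k = z * m" by blast
    then show "q dvd U k" using U_dvd[of z m] zp dvd_trans by blast
  next
    assume qk: "q dvd U k"
    show "z dvd k"
    proof (rule ccontr)
      assume nz: "\<not> z dvd k"
      define rho where "rho = k mod z"
      define m where "m = k div z"
      have rho: "0 < rho" "rho < z" using nz zp unfolding rho_def by (auto simp: dvd_eq_mod_eq_0 gr0I)
      have km: "k = z * m + rho" unfolding rho_def m_def by simp
      show False
      proof (cases "m = 0")
        case True
        then show False using km rho zmin qk by simp
      next
        case False
        define x where "x = z * m - 1"
        have x: "z * m = x + 1" unfolding x_def using False zp by simp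
        have "U z dvd U (x+1)" using U_dvd[of z m] x by simp
        then have qa: "q dvd U (x+1)" using zp dvd_trans by blast
        have "U k = U (x+1) * U (rho+1) + s * U x * U rho" using U_add[of x rho] km x by simp
        moreover have "q dvd U (x+1) * U (rho+1)" using qa by simp
        ultimately have "q dvd U k - U (x+1) * U (rho+1)" using qk by (intro dvd_diff)
        then have "q dvd s * U x * U rho" using \<open>U k = U (x+1) * U (rho+1) + s * U x * U rho\<close> by simp
        then have "q dvd U x \<or> q dvd U rho" using q qs by (simp add: prime_dvd_mult_iff)
        then show False using consec[OF q qs, of x] qa zmin rho by blast
      qed
    qed
  qed
  then show ?thesis using zp by blast
qed


end

context lucas begin
lemma U_2: "U 2 = r" and U_3: "U 3 = r^2 + s"
proof -
  show "U 2 = r" using U_rec[of 0] U_0 U_1 by (simp add: numeral_2_eq_2)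
  moreover have "U 3 = r * U 2 + s * U 1" using U_rec[of 1] by (simp add: numeral_3_eq_3 numeral_2_eq_2)
  ultimately show "U 3 = r^2 + s" using U_1 by (simp add: power2_eq_square)
qed

lemma z_D:
  assumes q: "prime (q::int)" and qs: "\<not> q dvd s" and qD: "q dvd r^2 + 4 * s"
    and zc: "\<forall>k. q dvd U k \<longleftrightarrow> z dvd k"
  shows "z = nat q"
proof -
  have qD': "q dvd r^2 - 4 * (-s)" using qD by simp
  have qQ: "\<not> q dvd (-s)" using qs by simp
  have "q dvd U k \<longleftrightarrow> q dvd int k" for k
    using lu_dvd_iff_D[OF q qD' qQ, of k] U_lu by simp
  moreover have qn: "q = int (nat q)" using prime_gt_0_int[OF q] by simp
  moreover have "int (nat q) dvd int k \<longleftrightarrow> nat q dvd k" for k by (rule of_nat_dvd_iff)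
  ultimately have e: "z dvd k \<longleftrightarrow> nat q dvd k" for k
    using zc by metis
  show ?thesis using e[of z] e[of "nat q"] by (simp add: dvd_antisym)
qed

lemma z_2:
  assumes qs: "\<not> 2 dvd s" and zc: "\<forall>k. (2::int) dvd U k \<longleftrightarrow> z dvd k"
  shows "z = 2 \<or> z = 3"
proof -
  have z1: "\<not> z dvd 1" using zc[rule_format, of 1] U_1 by simp
  show ?thesis
  proof (cases "2 dvd r")
    case True
    then have "z dvd 2" using zc[rule_format, of 2] U_2 by simp
    then have "z \<le> 2" by (simp add: dvd_imp_le)
    then show ?thesis using z1 \<open>z dvd 2\<close> by (cases z) (auto simp: le_Suc_eq)
  next
    case False
    then have "2 dvd r^2 + s" using qs by simp
    then have "z dvd 3" using zc[rule_format, of 3] U_3 by simp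
    then have "z \<le> 3" by (simp add: dvd_imp_le)
    moreover have "z \<noteq> 2" using \<open>z dvd 3\<close> by auto
    ultimately show ?thesis using z1 \<open>z dvd 3\<close> by (cases z) (auto simp: le_Suc_eq numeral_3_eq_3)
  qed
qed

lemma z_app:
  assumes q: "prime (q::int)" and q2: "q \<noteq> 2" and qs: "\<not> q dvd s" and qD: "\<not> q dvd r^2 + 4 * s"
    and zc: "\<forall>k. q dvd U k \<longleftrightarrow> z dvd k"
  shows "z dvd nat q - 1 \<or> z dvd nat q + 1"
proof -
  define p where "p = nat q"
  have qp: "q = int p" unfolding p_def using prime_gt_0_int[OF q] by simp
  have p: "prime p" "p > 2" using q q2 prime_ge_2_int[OF q] unfolding qp by auto
  have "int p dvd lu r (-s) (p-1) \<or> int p dvd lu r (-s) (p+1)"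
    by (rule lu_appear[OF p]) (use qs qD qp in simp_all)
  then show ?thesis using zc U_lu unfolding p_def[symmetric] qp by simp
qed

lemma R2:
  assumes q: "prime (q::int)" and m: "m > 0" "q dvd U m" and k: "k > 0" "\<not> q dvd int k"
  shows "multiplicity q (U (m*k)) = multiplicity q (U m)"
proof -
  define L where "L = lu (V m) ((-s)^m) k"
  have e: "U (m*k) = U m * L" unfolding L_def by (rule U_derived)
  have qs: "\<not> q dvd s" using not_dvd_s[OF q m(1) m(2)] .
  have "q dvd (U m)^2" using m(2) by (simp add: power2_eq_square)
  then have qD: "q dvd (V m)^2 - 4 * (-s)^m" unfolding derived_disc by (rule dvd_mult)
  have qQ: "\<not> q dvd (-s)^m"
  proof
    assume "q dvd (-s)^m"
    then have "q dvd -s" using q by (rule prime_dvd_power[rotated])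
    then show False using qs by simp
  qed
  have nL: "\<not> q dvd L" unfolding L_def using lu_dvd_iff_D[OF q qD qQ, of k] k(2) by blast
  have nz: "U (m*k) \<noteq> 0" using U_nz[of "m*k"] m k by simp
  have "U m \<noteq> 0" "L \<noteq> 0" using nz unfolding e by auto
  then have "multiplicity q (U (m*k)) = multiplicity q (U m) + multiplicity q L"
    unfolding e using q unfolding prime_def by (intro prime_elem_multiplicity_mult_distrib) auto
  then show ?thesis using nL by (simp add: not_dvd_imp_multiplicity_0)
qed

lemma R3:
  assumes q: "prime (q::int)" and q2: "q \<noteq> 2" and m: "m > 0" "q dvd U m"
  shows "multiplicity q (U (m * nat q)) = multiplicity q (U m) + 1"
proof -
  define L where "L = lu (V m) ((-s)^m) (nat q)"
  have e: "U (m * nat q) = U m * L" unfolding L_def by (rule U_derived)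
  have qs: "\<not> q dvd s" using not_dvd_s[OF q m(1) m(2)] .
  have "q^2 dvd (U m)^2" using m(2) by (rule dvd_power_same)
  then have q2D: "q^2 dvd (V m)^2 - 4 * (-s)^m" unfolding derived_disc by (rule dvd_mult)
  then have qD: "q dvd (V m)^2 - 4 * (-s)^m" by (rule dvd_trans[rotated]) (simp add: power2_eq_square)
  have qQ: "\<not> q dvd (-s)^m"
  proof
    assume "q dvd (-s)^m"
    then have "q dvd -s" using q by (rule prime_dvd_power[rotated])
    then show False using qs by simp
  qed
  have lift: "q dvd L \<and> \<not> q^2 dvd L" unfolding L_def using lu_lift[OF q q2 qD qQ] q2D by blast
  have mL: "multiplicity q L = 1" using lift by (intro multiplicity_eqI) (simp_all add: power2_eq_square)
  have nz: "U (m * nat q) \<noteq> 0" using U_nz[of "m * nat q"] m prime_gt_0_int[OF q] by simp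
  have "U m \<noteq> 0" "L \<noteq> 0" using nz unfolding e by auto
  then have "multiplicity q (U (m * nat q)) = multiplicity q (U m) + multiplicity q L"
    unfolding e using q unfolding prime_def by (intro prime_elem_multiplicity_mult_distrib) auto
  then show ?thesis using mL by simp
qed

lemma f_p:
  assumes q: "prime (q::int)" and q5: "q \<ge> 5" and qD: "q dvd r^2 + 4 * s" and qs: "\<not> q dvd s"
  shows "multiplicity q (U (nat q)) = 1"
proof -
  have "q dvd lu r (-s) (nat q) \<and> \<not> q^2 dvd lu r (-s) (nat q)"
    by (rule lu_lift[OF q]) (use q5 qD qs in simp_all)
  then show ?thesis unfolding U_lu[symmetric] by (intro multiplicity_eqI) (simp_all add: power2_eq_square)
qed

lemma R3_2:
  assumes m: "m > 0" "even m" "2 dvd U m"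
  shows "multiplicity 2 (U (m*2)) = multiplicity 2 (U m) + 1"
proof -
  have qs: "\<not> 2 dvd s" using not_dvd_s[of 2 m] m by simp
  obtain c where c: "m = 2*c" using m(2) by blast
  have e: "U (m*2) = U m * V m" using UV[of m] by (simp add: mult.commute)
  have Vc_even: "2 dvd V c"
  proof (rule ccontr)
    assume nV: "\<not> 2 dvd V c"
    have "U m = U c * V c" using UV c by simp
    then have "2 dvd U c" using m(3) nV by (simp add: prime_dvd_mult_iff[of "2::int"])
    then have "2 dvd (r^2 + 4 * s) * (U c)^2 + 4 * (-s)^c" by simp
    moreover have "(V c)^2 = (r^2 + 4 * s) * (U c)^2 + 4 * (-s)^c" using derived_disc[of c] by simp
    ultimately have "2 dvd (V c)^2" by simp
    then show False using nV by simp
  qed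
  have Vm: "V m = (V c)^2 - 2 * (-s)^c" using V_double c by simp
  have d4: "4 dvd (V c)^2" using Vc_even by (auto simp: power2_eq_square)
  have "2 dvd (V c)^2" using Vc_even by simp
  then have A: "2 dvd V m" unfolding Vm by (intro dvd_diff) simp_all
  have B: "\<not> 2^2 dvd V m"
  proof
    assume "2^2 dvd V m"
    then have h4: "4 dvd (V c)^2 - 2 * (-s)^c" using Vm by simp
    have "4 dvd (V c)^2 - ((V c)^2 - 2 * (-s)^c)" by (rule dvd_diff[OF d4 h4])
    then have "2 * 2 dvd 2 * (-s)^c" by simp
    then have "2 dvd (-s)^c" using dvd_times_left_cancel_iff[of "2::int" 2 "(-s)^c"] by simp
    then show False using qs by (simp add: prime_dvd_power_iff)
  qed
  have mV: "multiplicity 2 (V m) = 1" using A B by (intro multiplicity_eqI) simp_all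
  have "U m \<noteq> 0" using U_nz m by simp
  then have "multiplicity (2::int) (U (m*2)) = multiplicity 2 (U m) + multiplicity 2 (V m)"
    unfolding e using V_nz by (intro prime_elem_multiplicity_mult_distrib) simp_all
  then show ?thesis using mV by simp
qed

lemma R3_iter:
  assumes q: "prime (q::int)" and q2: "q \<noteq> 2" and m: "m > 0" "q dvd U m"
  shows "multiplicity q (U (m * nat q ^ j)) = multiplicity q (U m) + j"
proof (induction j)
  case 0 then show ?case by simp
next
  case (Suc j)
  have qp: "nat q > 0" using prime_gt_0_int[OF q] by simp
  have pos: "m * nat q ^ j > 0" using m qp by simp
  have d: "q dvd U (m * nat q ^ j)" using U_dvd[of m "nat q ^ j"] m(2) dvd_trans by blast
  have "multiplicity q (U (m * nat q ^ Suc j)) = multiplicity q (U ((m * nat q ^ j) * nat q))"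
    by (simp add: ac_simps)
  also have "\<dots> = multiplicity q (U (m * nat q ^ j)) + 1" using R3[OF q q2 pos d] .
  finally show ?case using Suc by simp
qed

lemma R3_2_iter:
  assumes m: "m > 0" "even m" "2 dvd U m"
  shows "multiplicity 2 (U (m * 2 ^ j)) = multiplicity 2 (U m) + j"
proof (induction j)
  case 0 then show ?case by simp
next
  case (Suc j)
  have pos: "m * 2 ^ j > 0" using m by simp
  have ev: "even (m * 2 ^ j)" using m by simp
  have d: "2 dvd U (m * 2 ^ j)" using U_dvd[of m "2 ^ j"] m(3) dvd_trans by blast
  have "multiplicity 2 (U (m * 2 ^ Suc j)) = multiplicity (2::int) (U ((m * 2 ^ j) * 2))"
    by (simp add: ac_simps)
  also have "\<dots> = multiplicity 2 (U (m * 2 ^ j)) + 1" using R3_2[OF pos ev d] .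
  finally show ?case using Suc by simp
qed


end


lemma idx:
  fixes p z n h t :: nat
  assumes p: "prime p" and h: "h \<ge> 1" and pd: "p^(h+t) dvd n" and n: "n > 0"
    and zn: "z dvd n" and nz: "\<not> p^h dvd z"
  shows "z dvd n div p^(t+1)"
proof -
  have "p^(t+1) dvd p^(h+t)" using h by (intro le_imp_power_dvd) simp
  then have pt: "p^(t+1) dvd n" using pd by (rule dvd_trans)
  define m where "m = n div p^(t+1)"
  have nm: "n = m * p^(t+1)" unfolding m_def using pt by simp
  have m0: "m \<noteq> 0" using nm n by auto
  have z0: "z \<noteq> 0" using zn n by auto
  have p0: "p \<noteq> 0" using p by auto
  have "z dvd m"
  proof (rule multiplicity_le_imp_dvd[OF z0])
    fix l :: nat assume l: "prime l"
    have mn: "multiplicity l n = multiplicity l m + multiplicity l (p^(t+1))"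
      unfolding nm using l m0 p0 by (intro prime_elem_multiplicity_mult_distrib) auto
    have zn': "multiplicity l z \<le> multiplicity l n" using zn n by (intro dvd_imp_multiplicity_le) auto
    show "multiplicity l z \<le> multiplicity l m"
    proof (cases "l = p")
      case False
      have "\<not> l dvd p^(t+1)"
      proof
        assume "l dvd p^(t+1)"
        then have "l dvd p" using l prime_dvd_power by blast
        then show False using l p False primes_dvd_imp_eq by blast
      qed
      then have "multiplicity l (p^(t+1)) = 0" by (rule not_dvd_imp_multiplicity_0)
      then show ?thesis using mn zn' by simp
    next
      case True
      have a: "multiplicity p (p^(t+1)) = t+1" using p by (intro multiplicity_prime_power) simp
      have b: "h + t \<le> multiplicity p n" using pd n p by (intro multiplicity_geI) auto
      have c: "multiplicity p z < h"
        using nz multiplicity_dvd'[of h p z] by (meson not_less)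
      show ?thesis using True mn a b c by simp
    qed
  qed
  then show ?thesis unfolding m_def .
qed

lemma good_from_z:
  fixes n0 z :: nat and q :: int
  assumes nz: "n0 dvd z" and zq: "z dvd nat q - 1 \<or> z dvd nat q + 1" and q1: "q \<ge> 1"
  shows "[q = 1] (mod int n0) \<or> [q = -1] (mod int n0)"
  using zq
proof
  assume "z dvd nat q - 1"
  then have "n0 dvd nat q - 1" using nz by (rule dvd_trans[rotated])
  then have "int n0 dvd int (nat q - 1)" by (simp only: of_nat_dvd_iff)
  moreover have "int (nat q - 1) = q - 1" using q1 by simp
  ultimately have "int n0 dvd q - 1" by simp
  then show ?thesis by (simp add: cong_iff_dvd_diff)
next
  assume "z dvd nat q + 1"
  then have "n0 dvd nat q + 1" using nz by (rule dvd_trans[rotated])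
  then have "int n0 dvd int (nat q + 1)" by (simp only: of_nat_dvd_iff)
  moreover have "int (nat q + 1) = q - (-1)" using q1 by simp
  ultimately have "int n0 dvd q - (-1)" by (simp add: add.commute)
  then show ?thesis by (simp add: cong_iff_dvd_diff)
qed

lemma prime_int_eq: "prime (q::int) \<Longrightarrow> prime (p::nat) \<Longrightarrow> q dvd int p \<Longrightarrow> q = int p"
  using primes_dvd_imp_eq[of q "int p"] by simp

context lucas begin

lemma bad_z:
  assumes q: "prime (q::int)" and qs: "\<not> q dvd s" and zc: "\<forall>k. q dvd U k \<longleftrightarrow> z dvd k"
    and z0: "z > 0" and nz: "n0 dvd z" and n0: "n0 > 3"
    and nb: "\<not> ([q = 1] (mod int n0) \<or> [q = -1] (mod int n0))"
  shows "q \<noteq> 2 \<and> q dvd r^2 + 4 * s \<and> z = nat q"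
proof -
  have q2: "q \<noteq> 2"
  proof
    assume q2: "q = 2"
    then have "z = 2 \<or> z = 3" using z_2 qs zc by simp
    then have "z \<le> 3" by auto
    moreover have "n0 \<le> z" using nz z0 by (simp add: dvd_imp_le)
    ultimately show False using n0 by simp
  qed
  have qD: "q dvd r^2 + 4 * s"
  proof (rule ccontr)
    assume "\<not> q dvd r^2 + 4 * s"
    then have "z dvd nat q - 1 \<or> z dvd nat q + 1" using z_app[OF q q2 qs _ zc] by blast
    then have "[q = 1] (mod int n0) \<or> [q = -1] (mod int n0)"
      using good_from_z[OF nz] prime_ge_2_int[OF q] by simp
    then show False using nb by blast
  qed
  have "z = nat q" using z_D[OF q qs qD zc] .
  then show ?thesis using q2 qD by simp
qed

lemma partA:
  fixes p h t n :: nat and q :: int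
  assumes p: "prime p" and h: "h \<ge> 1" and n0: "p^h > 4" and pd: "p^(h+t) dvd n" and n: "n > 0"
    and q: "prime q" and nb: "\<not> ([q = 1] (mod int (p^h)) \<or> [q = -1] (mod int (p^h)))"
  shows "int (multiplicity q (U n)) - int (multiplicity q (U (n div p^(t+1)))) \<le> (if q = int p then int (t+1) else 0)"
proof -
  define m where "m = n div p^(t+1)"
  have "p^(t+1) dvd p^(h+t)" using h by (intro le_imp_power_dvd) simp
  then have pt: "p^(t+1) dvd n" using pd by (rule dvd_trans)
  have nm: "n = m * p^(t+1)" unfolding m_def using pt by simp
  have m0: "m > 0" using nm n by (cases m) auto
  have p0: "p > 0" using p prime_gt_0_nat by blast
  have rhs0: "0 \<le> (if q = int p then int (t+1) else 0)" by simp
  show ?thesis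
  proof (cases "q dvd U n")
    case False
    then have "multiplicity q (U n) = 0" by (rule not_dvd_imp_multiplicity_0)
    then show ?thesis unfolding m_def[symmetric] using rhs0 by simp
  next
    case True
    obtain z where z0: "z > 0" and zc: "\<forall>k. q dvd U k \<longleftrightarrow> z dvd k" using rank[OF q n True] by blast
    have qs: "\<not> q dvd s" using not_dvd_s[OF q n True] .
    show ?thesis
    proof (cases "z dvd m")
      case True
      then have qm: "q dvd U m" using zc by blast
      show ?thesis
      proof (cases "q = int p")
        case qp: True
        then have nq: "nat q = p" by simp
        show ?thesis
        proof (cases "p = 2")
          case p2: True
          have h3: "h \<ge> 3"
          proof (rule ccontr)
            assume "\<not> h \<ge> 3"
            then have "h \<le> 2" by simp
            then have "p^h \<le> 2^2" using p2 power_increasing[of h 2 "2::nat"] by simp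
            then show False using n0 by simp
          qed
          have hh: "h + t = (h - 1) + (t + 1)" using h by simp
          have "(2::nat)^(h+t) = 2^(h-1) * 2^(t+1)" unfolding hh by (rule power_add)
          then have "2^(h-1) * 2^(t+1) = (2::nat)^(h+t)" by simp
          then have "2^(h-1) * 2^(t+1) dvd m * 2^(t+1)" using pd nm p2 by simp
          then have "2^(h-1) dvd m" by simp
          moreover have "(2::nat) dvd 2^(h-1)" using h3 by simp
          ultimately have ev: "even m" by (rule dvd_trans[rotated])
          have q2: "q = 2" using qp p2 by simp
          have "multiplicity 2 (U (m * 2^(t+1))) = multiplicity 2 (U m) + (t+1)"
          proof -
            have "2 dvd U m" using qm q2 by simp
            then show ?thesis using R3_2_iter[OF m0 ev] by blast
          qed
          then show ?thesis unfolding m_def[symmetric] using nm q2 p2 by simp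
        next
          case p2: False
          have q2: "q \<noteq> 2" using qp p2 by simp
          have "multiplicity q (U (m * nat q^(t+1))) = multiplicity q (U m) + (t+1)"
            using R3_iter[OF q q2 m0 qm] .
          then show ?thesis unfolding m_def[symmetric] using nm nq qp by simp
        qed
      next
        case qp: False
        have "\<not> q dvd int (p^(t+1))"
        proof
          assume "q dvd int (p^(t+1))"
          then have "q dvd int p ^ (t+1)" by simp
          then have "q dvd int p" using q prime_dvd_power by blast
          then show False using prime_int_eq[OF q p] qp by blast
        qed
        moreover have "p^(t+1) > 0" using p0 by simp
        ultimately have "multiplicity q (U (m * p^(t+1))) = multiplicity q (U m)"
          using R2[OF q m0 qm] by blast
        then show ?thesis unfolding m_def[symmetric] using nm qp by simp
      qed
    next
      case zm: False
      have fm: "multiplicity q (U m) = 0" using zm zc not_dvd_imp_multiplicity_0 by blast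
      show ?thesis
      proof (cases "z dvd n")
        case False
        then have "multiplicity q (U n) = 0" using zc not_dvd_imp_multiplicity_0 by blast
        then show ?thesis unfolding m_def[symmetric] using fm by simp
      next
        case True
        have phz: "p^h dvd z"
        proof (rule ccontr)
          assume "\<not> p^h dvd z"
          then have "z dvd n div p^(t+1)" using idx[OF p h pd n True] by blast
          then show False using zm unfolding m_def by simp
        qed
        have bz: "q \<noteq> 2 \<and> q dvd r^2 + 4 * s \<and> z = nat q"
          using bad_z[OF q qs zc z0 phz _ nb] n0 by simp
        then have q2: "q \<noteq> 2" and qD: "q dvd r^2 + 4 * s" and zq: "z = nat q" by auto
        have "p dvd p^h" using h by (simp add: dvd_power)
        then have "p dvd nat q" using phz zq by (metis dvd_trans)
        moreover have "prime (nat q)" using q prime_nat_iff_prime prime_ge_0_int by auto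
        ultimately have pq: "p = nat q" using p primes_dvd_imp_eq by blast
        then have qp: "q = int p" using prime_ge_0_int[OF q] by simp
        have "p^h \<le> p" using phz zq pq p0 by (simp add: dvd_imp_le)
        then have h1: "h = 1" using h p prime_gt_1_nat[OF p]
          by (metis le_antisym power_increasing_iff power_one_right)
        then have q5: "q \<ge> 5" using n0 qp by simp
        have pm: "\<not> p dvd m" using zm zq pq by simp
        have pm0: "p * m > 0" using p0 m0 by simp
        have qpm: "q dvd U (p * m)" using zc zq pq by simp
        have e1: "multiplicity q (U ((p * m) * nat q ^ t)) = multiplicity q (U (p*m)) + t"
          using R3_iter[OF q q2 pm0 qpm] .
        have qpp: "q dvd U p" using zc zq pq by simp
        have "\<not> q dvd int m" using pm qp by simp
        then have e2: "multiplicity q (U (p * m)) = multiplicity q (U p)"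
          using R2[OF q p0 qpp m0] by blast
        have e3: "multiplicity q (U p) = 1" using f_p[OF q q5 qD qs] pq by simp
        have "n = (p * m) * nat q ^ t" using nm pq by (simp add: ac_simps)
        then have "multiplicity q (U n) = t + 1" using e1 e2 e3 by simp
        then show ?thesis unfolding m_def[symmetric] using fm qp by simp
      qed
    qed
  qed
qed

end


lemma dvd_cancel_odd:
  fixes z m P' :: nat
  assumes "odd P'" "z dvd m * P'" "z dvd m * 2"
  shows "z dvd m"
proof -
  have "z dvd gcd (m * P') (m * 2)" using assms by simp
  also have "gcd (m * P') (m * 2) = m * gcd P' 2" by (simp add: gcd_mult_distrib_nat)
  also have "gcd P' 2 = 1" using assms(1) by (simp add: coprime_iff_gcd_eq_1[symmetric])
  finally show ?thesis by simp
qed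

context lucas begin

lemma mult_V:
  assumes q: "prime (q::int)" and k: "k > 0"
  shows "multiplicity q (U (2*k)) = multiplicity q (U k) + multiplicity q (V k)"
proof -
  have "U k \<noteq> 0" using U_nz k by simp
  then show ?thesis unfolding UV using q V_nz unfolding prime_def
    by (intro prime_elem_multiplicity_mult_distrib) auto
qed

lemma partC:
  fixes p h t n :: nat and q :: int
  assumes p: "prime p" and p2: "p \<noteq> 2" and h: "h \<ge> 1" and n0: "p^h > 4" and pd: "p^(h+t) dvd n" and n: "n > 0"
    and q: "prime q" and nb: "\<not> ([q = 1] (mod int (p^h)) \<or> [q = -1] (mod int (p^h)))"
  shows "int (multiplicity q (V n)) - int (multiplicity q (V (n div p^(t+1)))) \<le> (if q = int p then int (t+1) else 0)"
proof -
  define m where "m = n div p^(t+1)"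
  have "p^(t+1) dvd p^(h+t)" using h by (intro le_imp_power_dvd) simp
  then have pt: "p^(t+1) dvd n" using pd by (rule dvd_trans)
  have nm: "n = m * p^(t+1)" unfolding m_def using pt by simp
  have nm2: "2*n = (2*m) * p^(t+1)" using nm by simp
  have m0: "m > 0" using nm n by (cases m) auto
  have p0: "p > 0" using p prime_gt_0_nat by blast
  have rhs0: "0 \<le> (if q = int p then int (t+1) else 0)" by simp
  have gn: "multiplicity q (U (2*n)) = multiplicity q (U n) + multiplicity q (V n)" using mult_V[OF q n] .
  have gm: "multiplicity q (U (2*m)) = multiplicity q (U m) + multiplicity q (V m)" using mult_V[OF q m0] .
  have oddp: "odd p" using p p2 prime_odd_nat prime_ge_2_nat by (metis le_neq_implies_less)
  have nqp: "q \<noteq> int p \<Longrightarrow> \<not> q dvd int (p^(t+1))"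
  proof
    assume "q \<noteq> int p" "q dvd int (p^(t+1))"
    then have "q dvd int p ^ (t+1)" by simp
    then have "q dvd int p" using q prime_dvd_power by blast
    then show False using prime_int_eq[OF q p] \<open>q \<noteq> int p\<close> by blast
  qed
  have ppos: "p^(t+1) > 0" using p0 by simp
  show ?thesis
  proof (cases "q dvd U (2*n)")
    case False
    then have "multiplicity q (U (2*n)) = 0" by (rule not_dvd_imp_multiplicity_0)
    then show ?thesis unfolding m_def[symmetric] using rhs0 gn by simp
  next
    case True
    have n2: "2*n > 0" using n by simp
    obtain z where z0: "z > 0" and zc: "\<forall>k. q dvd U k \<longleftrightarrow> z dvd k" using rank[OF q n2 True] by blast
    have qs: "\<not> q dvd s" using not_dvd_s[OF q n2 True] .
    have m20: "2*m > 0" using m0 by simp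
    show ?thesis
    proof (cases "z dvd m")
      case True
      then have qm: "q dvd U m" using zc by blast
      have qm2: "q dvd U (2*m)" using True zc by simp
      show ?thesis
      proof (cases "q = int p")
        case qp: True
        then have nq: "nat q = p" by simp
        have q2: "q \<noteq> 2" using qp p2 by simp
        have i1: "m * nat q^(t+1) = n" "(2*m) * nat q^(t+1) = 2*n" using nm nm2 nq by simp_all
        have "multiplicity q (U n) = multiplicity q (U m) + (t+1)"
          using R3_iter[OF q q2 m0 qm, of "t+1"] unfolding i1 .
        moreover have "multiplicity q (U (2*n)) = multiplicity q (U (2*m)) + (t+1)"
          using R3_iter[OF q q2 m20 qm2, of "t+1"] unfolding i1 .
        ultimately show ?thesis unfolding m_def[symmetric] using qp gn gm by simp
      next
        case qp: False
        have i1: "m * p^(t+1) = n" "(2*m) * p^(t+1) = 2*n" using nm nm2 by simp_all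
        have "multiplicity q (U n) = multiplicity q (U m)"
          using R2[OF q m0 qm ppos nqp[OF qp]] unfolding i1 .
        moreover have "multiplicity q (U (2*n)) = multiplicity q (U (2*m))"
          using R2[OF q m20 qm2 ppos nqp[OF qp]] unfolding i1 .
        ultimately show ?thesis unfolding m_def[symmetric] using qp gn gm by simp
      qed
    next
      case zm: False
      have fm: "multiplicity q (U m) = 0" using zm zc not_dvd_imp_multiplicity_0 by blast
      show ?thesis
      proof (cases "z dvd 2*m")
        case True
        have qm2: "q dvd U (2*m)" using True zc by simp
        have zn: "\<not> z dvd n"
        proof
          assume "z dvd n"
          then have "z dvd m * p^(t+1)" using nm by simp
          moreover have "z dvd m * 2" using True by (simp add: mult.commute)
          moreover have "odd (p^(t+1))" using oddp by simp
          ultimately have "z dvd m" using dvd_cancel_odd by blast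
          then show False using zm by simp
        qed
        have fn: "multiplicity q (U n) = 0" using zn zc not_dvd_imp_multiplicity_0 by blast
        show ?thesis
        proof (cases "q = int p")
          case qp: True
          then have nq: "nat q = p" by simp
          have q2: "q \<noteq> 2" using qp p2 by simp
          have i1: "(2*m) * nat q^(t+1) = 2*n" using nm2 nq by simp
          have "multiplicity q (U (2*n)) = multiplicity q (U (2*m)) + (t+1)"
            using R3_iter[OF q q2 m20 qm2, of "t+1"] unfolding i1 .
          then show ?thesis unfolding m_def[symmetric] using qp gn gm fm fn by simp
        next
          case qp: False
          have i1: "(2*m) * p^(t+1) = 2*n" using nm2 by simp
          have "multiplicity q (U (2*n)) = multiplicity q (U (2*m))"
            using R2[OF q m20 qm2 ppos nqp[OF qp]] unfolding i1 .
          then show ?thesis unfolding m_def[symmetric] using qp gn gm fm fn by simp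
        qed
      next
        case z2m: False
        have fm2: "multiplicity q (U (2*m)) = 0" using z2m zc not_dvd_imp_multiplicity_0 by blast
        have gm0: "multiplicity q (V m) = 0" using gm fm2 by simp
        show ?thesis
        proof (cases "z dvd 2*n")
          case False
          then have "multiplicity q (U (2*n)) = 0" using zc not_dvd_imp_multiplicity_0 by blast
          then show ?thesis unfolding m_def[symmetric] using gn gm0 by simp
        next
          case True
          have pd2: "p^(h+t) dvd 2*n" using pd by simp
          have mm: "2*n div p^(t+1) = 2*m" using nm2 ppos by simp
          have phz: "p^h dvd z"
          proof (rule ccontr)
            assume "\<not> p^h dvd z"
            then have "z dvd 2*n div p^(t+1)" using idx[OF p h pd2 n2 True] by blast
            then show False using z2m mm by simp
          qed
          have bz: "q \<noteq> 2 \<and> q dvd r^2 + 4 * s \<and> z = nat q"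
            using bad_z[OF q qs zc z0 phz _ nb] n0 by simp
          then have q2: "q \<noteq> 2" and qD: "q dvd r^2 + 4 * s" and zq: "z = nat q" by auto
          have "p dvd p^h" using h by (simp add: dvd_power)
          then have "p dvd nat q" using phz zq by (metis dvd_trans)
          moreover have "prime (nat q)" using q prime_nat_iff_prime prime_ge_0_int by auto
          ultimately have pq: "p = nat q" using p primes_dvd_imp_eq by blast
          then have qp: "q = int p" using prime_ge_0_int[OF q] by simp
          have "p^h \<le> p" using phz zq pq p0 by (simp add: dvd_imp_le)
          then have h1: "h = 1" using h p prime_gt_1_nat[OF p]
            by (metis le_antisym power_increasing_iff power_one_right)
          then have q5: "q \<ge> 5" using n0 qp by simp
          have pm: "\<not> p dvd 2*m" using z2m zq pq by simp
          have pm0: "p * (2*m) > 0" using p0 m0 by simp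
          have qpm: "q dvd U (p * (2*m))" using zc zq pq by simp
          have e1: "multiplicity q (U ((p * (2*m)) * nat q ^ t)) = multiplicity q (U (p*(2*m))) + t"
            using R3_iter[OF q q2 pm0 qpm] .
          have qpp: "q dvd U p" using zc zq pq by simp
          have "\<not> q dvd int (2*m)" unfolding qp of_nat_dvd_iff using pm .
          then have e2: "multiplicity q (U (p * (2*m))) = multiplicity q (U p)"
            using R2[OF q p0 qpp m20] by blast
          have e3: "multiplicity q (U p) = 1" using f_p[OF q q5 qD qs] pq by simp
          have ii: "(p * (2*m)) * nat q ^ t = 2*n" using nm2 pq by (simp add: ac_simps)
          have "multiplicity q (U (2*n)) = t + 1" using e1 e2 e3 unfolding ii by simp
          then show ?thesis unfolding m_def[symmetric] using gn gm0 qp by simp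
        qed
      qed
    qed
  qed
qed

end


lemma prime_lt3: "prime (p::nat) \<Longrightarrow> p < 3 \<Longrightarrow> p = 2"
  using prime_ge_2_nat[of p] by simp

lemma h_ge3:
  fixes h :: nat
  assumes "h \<ge> 1" "(2::nat)^h * 3 \<notin> {6, 12}"
  shows "h \<ge> 3"
proof (rule ccontr)
  assume "\<not> h \<ge> 3"
  then have "h = 1 \<or> h = 2" using assms(1) by auto
  then show False using assms(2) by auto
qed

context lucas begin

lemma partB:
  fixes p p1 h h1 t n n0 :: nat and q :: int
  assumes p: "prime p" and p1: "prime p1" and pp1: "p < p1" and h: "h \<ge> 1" and h1: "h1 \<ge> 1"
    and n0d: "n0 = p^h * p1^h1" and n04: "n0 > 4" and n0e: "n0 \<notin> {6, 12}"
    and nd: "n0 * p^t dvd n" and n: "n > 0"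
    and q: "prime q" and nb: "\<not> ([q = 1] (mod int n0) \<or> [q = -1] (mod int n0))"
  shows "int (multiplicity q (U n)) - int (multiplicity q (U (n div p^(t+1))))
          - int (multiplicity q (U (n div p1))) + int (multiplicity q (U (n div (p1 * p^(t+1)))))
         \<le> (if q = int (if p1 = 3 \<and> h1 = 1 then p else p1) then int (t+1) else 0)"
proof -
  have p0: "p > 0" using p prime_gt_0_nat by blast
  have p10: "p1 > 0" using p1 prime_gt_0_nat by blast
  have pne: "p \<noteq> p1" using pp1 by simp
  have a: "p^h * p^t dvd n0 * p^t" using n0d by simp
  have "p^h * p^t dvd n" by (rule dvd_trans[OF a nd])
  then have pd: "p^(h+t) dvd n" by (simp add: power_add)
  have "p1^h1 dvd n0" using n0d by simp
  then have p1d: "p1^h1 dvd n" using nd by (meson dvd_mult_left dvd_trans)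
  have p1p: "p1 dvd p1^h1" using h1 by (simp add: dvd_power)
  then have p1n: "p1 dvd n" using p1d by (rule dvd_trans)
  have "p^(t+1) dvd p^(h+t)" using h by (intro le_imp_power_dvd) simp
  then have pt: "p^(t+1) dvd n" using pd by (rule dvd_trans)
  have "coprime p1 p" using p p1 pne primes_coprime by (metis)
  then have cop: "coprime p1 (p^(t+1))" by (simp add: coprime_power_right_iff)
  have "p1 * p^(t+1) dvd n" using p1n pt cop by (simp add: divides_mult)
  then obtain m' where nm': "n = m' * (p1 * p^(t+1))" by (metis dvd_div_mult_self dvd_mult_div_cancel mult.commute)
  define m where "m = m' * p1"
  define n' where "n' = m' * p^(t+1)"
  have ppos: "p^(t+1) > 0" using p0 by simp
  have em: "n div p^(t+1) = m" unfolding m_def using nm' ppos by (simp add: ac_simps)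
  have en': "n div p1 = n'" unfolding n'_def using nm' p10 by (simp add: ac_simps)
  have em': "n div (p1 * p^(t+1)) = m'" using nm' p10 ppos by simp
  have nm: "n = m * p^(t+1)" unfolding m_def using nm' by (simp add: ac_simps)
  have nn': "n = n' * p1" unfolding n'_def using nm' by (simp add: ac_simps)
  have m'0: "m' > 0" using nm' n by (cases m') auto
  have m0: "m > 0" and n'0: "n' > 0" unfolding m_def n'_def using m'0 p10 ppos by auto
  have Unz: "U k \<noteq> 0" if "k > 0" for k using U_nz that .
  have fle1: "multiplicity q (U m') \<le> multiplicity q (U m)"
    unfolding m_def using U_dvd[of m' p1] Unz m0 m_def by (intro dvd_imp_multiplicity_le) auto
  have fle2: "multiplicity q (U m') \<le> multiplicity q (U n')"
    unfolding n'_def using U_dvd[of m' "p^(t+1)"] Unz n'0 n'_def by (intro dvd_imp_multiplicity_le) auto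
  define P0 where "P0 = (if p1 = 3 \<and> h1 = 1 then p else p1)"
  have rhs0: "0 \<le> (if q = int P0 then int (t+1) else 0)" by simp
  have q2p1: "q = int p1 \<Longrightarrow> q \<noteq> 2" using pp1 prime_ge_2_nat[OF p] by auto
  have nqp: "q \<noteq> int pp \<Longrightarrow> prime pp \<Longrightarrow> \<not> q dvd int (pp^j)" for pp j
  proof
    assume "q \<noteq> int pp" "prime pp" "q dvd int (pp^j)"
    then have "q dvd int pp ^ j" by simp
    then have "q dvd int pp" using q prime_dvd_power by blast
    then show False using prime_int_eq[OF q \<open>prime pp\<close>] \<open>q \<noteq> int pp\<close> by blast
  qed
  have goal: "int (multiplicity q (U n)) - int (multiplicity q (U m)) - int (multiplicity q (U n')) + int (multiplicity q (U m'))
         \<le> (if q = int P0 then int (t+1) else 0)"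
  proof (cases "q dvd U n")
    case False
    then have "multiplicity q (U n) = 0" by (rule not_dvd_imp_multiplicity_0)
    then show ?thesis using fle1 rhs0 by simp
  next
    case True
    obtain z where z0: "z > 0" and zc: "\<forall>k. q dvd U k \<longleftrightarrow> z dvd k" using rank[OF q n True] by blast
    have qs: "\<not> q dvd s" using not_dvd_s[OF q n True] .
    show ?thesis
    proof (cases "z dvd m'")
      case True
      have qn': "q dvd U n'" using True zc unfolding n'_def by simp
      have qm': "q dvd U m'" using True zc by simp
      show ?thesis
      proof (cases "q = int p1")
        case qp: True
        have q2: "q \<noteq> 2" using q2p1 qp .
        have nq: "nat q = p1" using qp by simp
        have "multiplicity q (U (n' * nat q)) = multiplicity q (U n') + 1" using R3[OF q q2 n'0 qn'] .
        then have a: "multiplicity q (U n) = multiplicity q (U n') + 1" using nn' nq by simp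
        have "multiplicity q (U (m' * nat q)) = multiplicity q (U m') + 1" using R3[OF q q2 m'0 qm'] .
        then have b: "multiplicity q (U m) = multiplicity q (U m') + 1" using nq unfolding m_def by simp
        show ?thesis using a b rhs0 by simp
      next
        case qp: False
        have "multiplicity q (U (n' * p1^1)) = multiplicity q (U n')"
          using R2[OF q n'0 qn' _ nqp[OF qp p1, of 1]] p10 by simp
        then have "multiplicity q (U n) = multiplicity q (U n')" using nn' by simp
        then show ?thesis using fle1 rhs0 by simp
      qed
    next
      case zm': False
      have fm': "multiplicity q (U m') = 0" using zm' zc not_dvd_imp_multiplicity_0 by blast
      show ?thesis
      proof (cases "z dvd n'")
        case True
        have qn': "q dvd U n'" using True zc by simp
        show ?thesis
        proof (cases "q = int p1")
          case qp: True
          have q2: "q \<noteq> 2" using q2p1 qp .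
          have nq: "nat q = p1" using qp by simp
          have "multiplicity q (U (n' * nat q)) = multiplicity q (U n') + 1" using R3[OF q q2 n'0 qn'] .
          then have a: "multiplicity q (U n) = multiplicity q (U n') + 1" using nn' nq by simp
          have P0e: "P0 = p1"
          proof (rule ccontr)
            assume "P0 \<noteq> p1"
            then have c3: "p1 = 3" "h1 = 1" unfolding P0_def by (auto split: if_splits)
            then have p2: "p = 2" using pp1 p prime_lt3 by simp
            have n0v: "n0 = 2^h * 3" using n0d c3 p2 by simp
            have h3: "h \<ge> 3" using h_ge3[OF h] n0e n0v by simp
            have "2^(h+t) dvd n' * 3" using pd nn' p2 c3 by simp
            moreover have "coprime ((2::nat)^(h+t)) 3" by simp
            ultimately have pd': "2^(h+t) dvd n'" by (simp add: coprime_dvd_mult_left_iff)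
            have "z dvd n' div 2^(t+1)" if "\<not> 2^h dvd z" using idx[of 2 h t n' z] pd' n'0 True that h by simp
            moreover have "n' div 2^(t+1) = m'" unfolding n'_def p2 by simp
            ultimately have "2^h dvd z" using zm' by auto
            moreover have "(8::nat) dvd 2^h"
            proof -
              have "(2::nat)^3 dvd 2^h" using h3 by (intro le_imp_power_dvd)
              then show ?thesis by simp
            qed
            ultimately have z8: "8 dvd z" by (rule dvd_trans[rotated])
            then have z8': "z \<ge> 8" using z0 by (simp add: dvd_imp_le)
            have q3: "q = 3" using qp c3 by simp
            show False
            proof (cases "q dvd r^2 + 4 * s")
              case True
              then have "z = nat q" using z_D[OF q qs True zc] by simp
              then show False using z8' q3 by simp
            next
              case False
              have "z dvd nat q - 1 \<or> z dvd nat q + 1" using z_app[OF q q2 qs False zc] .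
              then have "z \<le> 4" using q3 by (auto dest: dvd_imp_le)
              then show False using z8' by simp
            qed
          qed
          show ?thesis using a fm' fle1 P0e qp by simp
        next
          case qp: False
          have "multiplicity q (U (n' * p1^1)) = multiplicity q (U n')"
            using R2[OF q n'0 qn' _ nqp[OF qp p1, of 1]] p10 by simp
          then have "multiplicity q (U n) = multiplicity q (U n')" using nn' by simp
          then show ?thesis using fle1 rhs0 by simp
        qed
      next
        case zn': False
        have fn': "multiplicity q (U n') = 0" using zn' zc not_dvd_imp_multiplicity_0 by blast
        show ?thesis
        proof (cases "z dvd n")
          case False
          then have "multiplicity q (U n) = 0" using zc not_dvd_imp_multiplicity_0 by blast
          then show ?thesis using fm' fn' rhs0 by simp
        next
          case zn: True
          have p1z: "p1^h1 dvd z"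
          proof (rule ccontr)
            assume "\<not> p1^h1 dvd z"
            then have "z dvd n div p1^(0+1)" using idx[of p1 h1 0 n z] p1 h1 p1d n zn by simp
            then show False using zn' en' by simp
          qed
          have p1z': "p1 dvd z" using dvd_trans[OF p1p p1z] .
          show ?thesis
          proof (cases "z dvd m")
            case True
            have qm: "q dvd U m" using True zc by simp
            show ?thesis
            proof (cases "q = int p")
              case qp: True
              have p2: "p = 2"
              proof (rule ccontr)
                assume p2: "p \<noteq> 2"
                have q2: "q \<noteq> 2" using qp p2 by simp
                show False
                proof (cases "q dvd r^2 + 4 * s")
                  case True
                  then have "z = p" using z_D[OF q qs True zc] qp by simp
                  then have "p1 dvd p" using p1z' by simp
                  then show False using p p1 pne primes_dvd_imp_eq by blast
                next
                  case False
                  have "z dvd nat q - 1 \<or> z dvd nat q + 1" using z_app[OF q q2 qs False zc] .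
                  then have "p1 dvd p - 1 \<or> p1 dvd p + 1" using p1z' qp by (auto intro: dvd_trans)
                  then show False
                  proof
                    assume "p1 dvd p - 1"
                    moreover have "p - 1 > 0" using prime_ge_2_nat[OF p] by simp
                    ultimately have "p1 \<le> p - 1" by (simp add: dvd_imp_le)
                    then show False using pp1 by simp
                  next
                    assume "p1 dvd p + 1"
                    then have "p1 \<le> p + 1" by (simp add: dvd_imp_le)
                    then have "p1 = p + 1" using pp1 by simp
                    moreover have "odd p" using p p2 prime_odd_nat prime_ge_2_nat by (metis le_neq_implies_less)
                    ultimately have "even p1" by simp
                    then have "p1 = 2" using p1 prime_odd_nat prime_ge_2_nat by (metis le_neq_implies_less)
                    then show False using pp1 prime_ge_2_nat[OF p] by simp
                  qed
                qed
              qed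
              have q2: "q = 2" using qp p2 by simp
              have zz: "z = 2 \<or> z = 3" using z_2 qs zc q2 by simp
              have "p1 \<le> z" using p1z' z0 by (simp add: dvd_imp_le)
              then have c3: "p1 = 3" using zz pp1 p2 by auto
              have z3: "z = 3" using zz p1z' c3 by auto
              have "h1 \<le> 1"
              proof (rule ccontr)
                assume "\<not> h1 \<le> 1"
                then have "(3::nat)^2 dvd 3^h1" by (intro le_imp_power_dvd) simp
                then have "9 dvd z" using p1z c3 by (simp add: dvd_trans)
                then show False using z3 by simp
              qed
              then have hh1: "h1 = 1" using h1 by simp
              have n0v: "n0 = 2^h * 3" using n0d c3 p2 hh1 by simp
              have h3: "h \<ge> 3" using h_ge3[OF h] n0e n0v by simp
              have hh: "h + t = (h - 1) + (t + 1)" using h by simp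
              have "(2::nat)^(h+t) = 2^(h-1) * 2^(t+1)" unfolding hh by (rule power_add)
              then have "2^(h-1) * 2^(t+1) dvd m * 2^(t+1)" using pd nm p2 by simp
              then have "2^(h-1) dvd m" by simp
              moreover have "(2::nat) dvd 2^(h-1)" using h3 by simp
              ultimately have ev: "even m" by (rule dvd_trans[rotated])
              have "2 dvd U m" using qm q2 by simp
              then have "multiplicity 2 (U (m * 2^(t+1))) = multiplicity 2 (U m) + (t+1)"
                using R3_2_iter[OF m0 ev] by blast
              then have "multiplicity q (U n) = multiplicity q (U m) + (t+1)" using nm p2 q2 by simp
              moreover have "P0 = p" unfolding P0_def using c3 hh1 by simp
              ultimately show ?thesis using fm' fn' qp by simp
            next
              case qp: False
              have "multiplicity q (U (m * p^(t+1))) = multiplicity q (U m)"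
                using R2[OF q m0 qm ppos nqp[OF qp p]] .
              then have "multiplicity q (U n) = multiplicity q (U m)" using nm by simp
              then show ?thesis using fm' fn' rhs0 by simp
            qed
          next
            case zm: False
            have phz: "p^h dvd z"
            proof (rule ccontr)
              assume "\<not> p^h dvd z"
              then have "z dvd n div p^(t+1)" using idx[OF p h pd n zn] by blast
              then show False using zm em by simp
            qed
            have "coprime p p1" using p p1 pne primes_coprime by metis
            then have "coprime (p^h) (p1^h1)" by (simp add: coprime_power_right_iff coprime_power_left_iff)
            then have n0z: "n0 dvd z" using phz p1z n0d by (simp add: divides_mult)
            have bz: "q \<noteq> 2 \<and> q dvd r^2 + 4 * s \<and> z = nat q"
              using bad_z[OF q qs zc z0 n0z _ nb] n04 by simp
            then have zq: "z = nat q" by simp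
            have pr: "prime z" using zq q prime_nat_iff_prime prime_ge_0_int by auto
            have "n0 = 1 \<or> n0 = z" using pr n0z by (simp add: prime_nat_iff)
            then have "prime n0" using n04 pr by auto
            moreover have "p^h > 1" using one_less_power[of p h] h prime_gt_1_nat[OF p] by simp
            moreover have "p1^h1 > 1" using one_less_power[of p1 h1] h1 prime_gt_1_nat[OF p1] by simp
            ultimately have False using n0d prime_product[of "p^h" "p1^h1"] by auto
            then show ?thesis by simp
          qed
        qed
      qed
    qed
  qed
  show ?thesis using goal unfolding em en' em' P0_def .
qed

end



lemma Pmax_val:
  fixes p p1 h h1 :: nat
  assumes p: "prime p" and p1: "prime p1" and pp1: "p < p1" and h: "h \<ge> 1" and h1: "h1 \<ge> 1"
  shows "Pmax (p^h * p1^h1 div gcd (p^h * p1^h1) 3) = (if p1 = 3 \<and> h1 = 1 then p else p1)"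
proof -
  define n0 where "n0 = p^h * p1^h1"
  define g where "g = gcd n0 3"
  define N where "N = n0 div g"
  have n00: "n0 > 0" unfolding n0_def using p p1 prime_gt_0_nat by simp
  have gd: "g dvd n0" "g dvd 3" unfolding g_def by simp_all
  have nN: "n0 = N * g" unfolding N_def using gd by simp
  have N0: "N > 0" using nN n00 by (cases N) auto
  have sub: "y = p \<or> y = p1" if "y \<in> prime_factors N" for y
  proof -
    have y: "prime y" "y dvd N" using that by auto
    then have "y dvd n0" using nN by simp
    then have "y dvd p^h \<or> y dvd p1^h1" unfolding n0_def using y(1) prime_dvd_mult_iff by blast
    then have "y dvd p \<or> y dvd p1" using y(1) prime_dvd_power by blast
    then show ?thesis using y(1) p p1 primes_dvd_imp_eq by blast
  qed
  have fin: "finite (prime_factors N)" by simp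
  show ?thesis
  proof (cases "p1 = 3 \<and> h1 = 1")
    case True
    then have p2: "p = 2" using pp1 p prime_ge_2_nat[of p] by simp
    have "n0 = 2^h * 3" unfolding n0_def using True p2 by simp
    then have "g = 3" unfolding g_def by simp
    then have "N = 2^h" unfolding N_def using \<open>n0 = 2^h * 3\<close> by simp
    then have "prime_factors N = {2}" using h by (simp add: prime_factors_power prime_prime_factors)
    then show ?thesis unfolding Pmax_def N_def g_def n0_def using True p2 by simp
  next
    case False
    have p1N: "p1 dvd N"
    proof (cases "p1 = 3")
      case c3: True
      then have "h1 \<ge> 2" using False h1 by simp
      then have "(3::nat)^2 dvd 3^h1" by (intro le_imp_power_dvd)
      then have "9 dvd n0" unfolding n0_def using c3 by (simp add: dvd_mult_left)
      then have "3 dvd n0" by (rule dvd_trans[rotated]) simp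
      then have "g = 3" unfolding g_def by (simp add: gcd_nat.absorb2)
      then have "3 * 3 dvd N * 3" using \<open>9 dvd n0\<close> nN by simp
      then show ?thesis using c3 by simp
    next
      case c3: False
      have "p1 dvd n0" unfolding n0_def using h1 by (simp add: dvd_power dvd_mult)
      then have "p1 dvd N \<or> p1 dvd g" using nN p1 prime_dvd_mult_iff by metis
      moreover have "\<not> p1 dvd g"
      proof
        assume "p1 dvd g"
        then have "p1 dvd 3" using gd dvd_trans by blast
        then have "p1 \<le> 3" by (simp add: dvd_imp_le)
        moreover have "p1 \<ge> 3" using pp1 prime_ge_2_nat[OF p] by simp
        ultimately have "p1 = 3" by simp
        then show False using c3 by simp
      qed
      ultimately show ?thesis by blast
    qed
    have mem: "p1 \<in> prime_factors N" using p1N p1 N0 by (simp add: in_prime_factors_iff)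
    have "Max (prime_factors N) = p1"
    proof (rule Max_eqI[OF fin])
      fix y assume "y \<in> prime_factors N"
      then have "y = p \<or> y = p1" by (rule sub)
      then show "y \<le> p1" using pp1 by auto
    next
      show "p1 \<in> prime_factors N" by (rule mem)
    qed
    then have PN: "Pmax (p^h * p1^h1 div gcd (p^h * p1^h1) 3) = p1" unfolding Pmax_def N_def g_def n0_def .
    have e: "(if p1 = 3 \<and> h1 = 1 then p else p1) = p1" using False by auto
    show ?thesis unfolding e by (rule PN)
  qed
qed


lemma ln_abs_sum:
  fixes x :: int and S :: "int set"
  assumes x: "x \<noteq> 0" and S: "finite S" "prime_factors x \<subseteq> S" "\<forall>q\<in>S. prime q"
  shows "ln \<bar>real_of_int x\<bar> = (\<Sum>q\<in>S. real (multiplicity q x) * ln (real_of_int q))"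
proof -
  have "\<bar>x\<bar> = (\<Prod>q\<in>prime_factors x. q ^ multiplicity q x)" using prod_prime_factors[OF x] by simp
  then have "real_of_int \<bar>x\<bar> = real_of_int (\<Prod>q\<in>prime_factors x. q ^ multiplicity q x)" by (rule arg_cong)
  then have "\<bar>real_of_int x\<bar> = (\<Prod>q\<in>prime_factors x. real_of_int q ^ multiplicity q x)"
    by (simp only: of_int_abs of_int_power of_int_prod)
  then have "ln \<bar>real_of_int x\<bar> = ln (\<Prod>q\<in>prime_factors x. real_of_int q ^ multiplicity q x)" by simp
  also have "\<dots> = (\<Sum>q\<in>prime_factors x. ln (real_of_int q ^ multiplicity q x))"
    by (rule ln_prod) (auto dest: in_prime_factors_imp_prime simp: prime_gt_0_int)
  also have "\<dots> = (\<Sum>q\<in>prime_factors x. real (multiplicity q x) * ln (real_of_int q))"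
    by (simp add: ln_realpow)
  also have "\<dots> = (\<Sum>q\<in>S. real (multiplicity q x) * ln (real_of_int q))"
  proof (rule sum.mono_neutral_left[OF S(1) S(2)])
    show "\<forall>i\<in>S - prime_factors x. real (multiplicity i x) * ln (real_of_int i) = 0"
    proof
      fix i assume "i \<in> S - prime_factors x"
      then have "prime i" "i \<notin> prime_factors x" using S(3) by auto
      then have "\<not> i dvd x" using x by (auto simp: in_prime_factors_iff)
      then show "real (multiplicity i x) * ln (real_of_int i) = 0" by (simp add: not_dvd_imp_multiplicity_0)
    qed
  qed
  finally show ?thesis .
qed

lemma Mfun_S:
  fixes x :: int and S :: "int set"
  assumes x: "x \<noteq> 0" and S: "finite S" "prime_factors x \<subseteq> S" "\<forall>q\<in>S. prime q"
  shows "Mfun n0 x = (\<Sum>q\<in>{q\<in>S. [q = 1] (mod int n0) \<or> [q = - 1] (mod int n0)}. real (multiplicity q x) * ln (real_of_int q))"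
  unfolding Mfun_def
proof (rule sum.mono_neutral_left)
  show "finite {q \<in> S. [q = 1] (mod int n0) \<or> [q = - 1] (mod int n0)}" using S(1) by simp
  show "{q \<in> prime_factors x. [q = 1] (mod int n0) \<or> [q = - 1] (mod int n0)} \<subseteq> {q \<in> S. [q = 1] (mod int n0) \<or> [q = - 1] (mod int n0)}"
    using S(2) by auto
  show "\<forall>i\<in>{q \<in> S. [q = 1] (mod int n0) \<or> [q = - 1] (mod int n0)} - {q \<in> prime_factors x. [q = 1] (mod int n0) \<or> [q = - 1] (mod int n0)}.
          real (multiplicity i x) * ln (real_of_int i) = 0"
  proof
    fix i assume "i \<in> {q \<in> S. [q = 1] (mod int n0) \<or> [q = - 1] (mod int n0)} - {q \<in> prime_factors x. [q = 1] (mod int n0) \<or> [q = - 1] (mod int n0)}"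
    then have "prime i" "i \<notin> prime_factors x" using S(3) by auto
    then have "\<not> i dvd x" using x by (auto simp: in_prime_factors_iff)
    then show "real (multiplicity i x) * ln (real_of_int i) = 0" by (simp add: not_dvd_imp_multiplicity_0)
  qed
qed

lemma combine:
  fixes S :: "int set" and e a :: "int \<Rightarrow> real" and G :: "int \<Rightarrow> bool" and P0 :: int and c :: real
  assumes S: "finite S" and S1: "\<forall>q\<in>S. q \<ge> 1"
    and good: "\<forall>q\<in>S. G q \<longrightarrow> e q \<le> a q" and bad: "\<forall>q\<in>S. \<not> G q \<longrightarrow> e q \<le> (if q = P0 then c else 0)"
    and c: "c \<ge> 0" and P0: "P0 \<ge> 1"
  shows "(\<Sum>q\<in>S. e q * ln (real_of_int q)) \<le> (\<Sum>q\<in>{q\<in>S. G q}. a q * ln (real_of_int q)) + c * ln (real_of_int P0)"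
proof -
  define l where "l q = ln (real_of_int q)" for q
  have l0: "l q \<ge> 0" if "q \<in> S" for q using S1 that unfolding l_def by simp
  have lP: "l P0 \<ge> 0" using P0 unfolding l_def by simp
  have "(\<Sum>q\<in>S. e q * l q) = (\<Sum>q\<in>S. (if G q then e q * l q else 0) + (if G q then 0 else e q * l q))"
    by (intro sum.cong) auto
  also have "\<dots> = (\<Sum>q\<in>S. if G q then e q * l q else 0) + (\<Sum>q\<in>S. if G q then 0 else e q * l q)"
    by (rule sum.distrib)
  also have "\<dots> \<le> (\<Sum>q\<in>S. if G q then a q * l q else 0) + (\<Sum>q\<in>S. if q = P0 then c * l P0 else 0)"
  proof (rule add_mono)
    show "(\<Sum>q\<in>S. if G q then e q * l q else 0) \<le> (\<Sum>q\<in>S. if G q then a q * l q else 0)"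
    proof (rule sum_mono)
      fix q assume q: "q \<in> S"
      show "(if G q then e q * l q else 0) \<le> (if G q then a q * l q else 0)"
        using good q l0[OF q] by (auto intro: mult_right_mono)
    qed
    show "(\<Sum>q\<in>S. if G q then 0 else e q * l q) \<le> (\<Sum>q\<in>S. if q = P0 then c * l P0 else 0)"
    proof (rule sum_mono)
      fix q assume q: "q \<in> S"
      have cl: "0 \<le> c * l P0" using c lP by simp
      show "(if G q then 0 else e q * l q) \<le> (if q = P0 then c * l P0 else 0)"
      proof (cases "G q")
        case True then show ?thesis using cl by simp
      next
        case False
        then have "e q \<le> (if q = P0 then c else 0)" using bad q by blast
        then have "e q * l q \<le> (if q = P0 then c else 0) * l q" using l0[OF q] by (rule mult_right_mono)
        then show ?thesis using False by (auto split: if_splits)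
      qed
    qed
  qed
  also have "(\<Sum>q\<in>S. if G q then a q * l q else 0) = (\<Sum>q\<in>{q\<in>S. G q}. a q * l q)"
    by (simp add: sum.inter_filter[OF S])
  also have "(\<Sum>q\<in>S. if q = P0 then c * l P0 else 0) \<le> c * l P0"
    using S c lP by (simp add: sum.delta')
  finally show ?thesis unfolding l_def by simp
qed


lemma PF_sub:
  fixes x y :: int
  assumes "y \<noteq> 0" "x dvd y"
  shows "prime_factors x \<subseteq> prime_factors y"
proof
  fix q assume "q \<in> prime_factors x"
  then have "prime q" "q dvd x" by (auto simp: in_prime_factors_iff)
  then show "q \<in> prime_factors y" using assms by (auto simp: in_prime_factors_iff intro: dvd_trans)
qed

lemma divdiv_aux: "(z::complex) \<noteq> 0 \<Longrightarrow> (x/z)/(y/z) = x/y"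
  by (cases "y = 0") (simp_all add: field_simps)

lemma div_pos_dvd: "(d::nat) dvd n \<Longrightarrow> n > 0 \<Longrightarrow> n div d > 0 \<and> (n div d) dvd n"
  by (auto elim!: dvdE simp: gr0I)

lemma cmod_ratio: "cmod (complex_of_int x / complex_of_int y) = \<bar>real_of_int x\<bar> / \<bar>real_of_int y\<bar>"
  by (simp add: norm_divide)

context lucas begin

lemma U_ratio:
  assumes "m > 0"
  shows "(a^n - b^n)/(a^m - b^m) = complex_of_int (U n) / complex_of_int (U m)"
proof -
  have amb: "a - b \<noteq> 0" using ab by simp
  have "complex_of_int (U n) / complex_of_int (U m) = ((a^n-b^n)/(a-b)) / ((a^m-b^m)/(a-b))" using Uc by simp
  also have "\<dots> = (a^n-b^n)/(a^m-b^m)" using amb by (rule divdiv_aux)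
  finally show ?thesis by simp
qed

lemma V_ratio: "(a^n + b^n)/(a^m + b^m) = complex_of_int (V n) / complex_of_int (V m)"
  using Vc by simp

lemma U_dvd': "m dvd n \<Longrightarrow> U m dvd U n"
  by (elim dvdE) (simp add: U_dvd)

end

theorem lemma1:
  fixes r s :: int and \<alpha> \<beta> :: complex and U V :: "nat \<Rightarrow> int"
    and n n0 p p1 t h h1 :: nat
  assumes "coprime r s" and "r \<noteq> (0::int)" and "s \<noteq> (0::int)" and "r^2 + 4 * s \<noteq> 0"
    and roots: "\<forall>x::complex. x^2 - of_int r * x - of_int s = (x - \<alpha>) * (x - \<beta>)"
    and "cmod \<alpha> \<ge> cmod \<beta>"
    and "\<forall>k::nat. k > 0 \<longrightarrow> (\<alpha> / \<beta>) ^ k \<noteq> 1"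
    and U_def: "\<forall>m. complex_of_int (U m) = (\<alpha>^m - \<beta>^m) / (\<alpha> - \<beta>)"
    and V_def: "\<forall>m. complex_of_int (V m) = \<alpha>^m + \<beta>^m"
    and "n > 0" and "prime p" and "prime p1" and "p < p1" and "h \<ge> 1" and "h1 \<ge> 1"
    and "n0 = p^h \<or> n0 = p^h * p1^h1" and "n0 > 4" and "n0 \<notin> {6, 12}"
    and "n0 * p^t dvd n"
  shows
    "(n0 = p^h \<longrightarrow>
        Mfun n0 (U n) \<ge> ln (cmod ((\<alpha>^n - \<beta>^n) / (\<alpha>^(n div p^(t+1)) - \<beta>^(n div p^(t+1)))))
                         - real (t+1) * ln (real p)) \<and>
     (n0 = p^h * p1^h1 \<longrightarrow>
        Mfun n0 (U n) \<ge> ln (cmod ((\<alpha>^n - \<beta>^n) / (\<alpha>^(n div p^(t+1)) - \<beta>^(n div p^(t+1))))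
                            * cmod ((\<alpha>^(n div (p1 * p^(t+1))) - \<beta>^(n div (p1 * p^(t+1))))
                                    / (\<alpha>^(n div p1) - \<beta>^(n div p1))))
                         - real (t+1) * ln (real (Pmax (n0 div gcd n0 3)))) \<and>
     (n0 = p^h \<and> p > 2 \<longrightarrow>
        Mfun n0 (V n) \<ge> ln (cmod ((\<alpha>^n + \<beta>^n) / (\<alpha>^(n div p^(t+1)) + \<beta>^(n div p^(t+1)))))
                         - real (t+1) * ln (real p))"

proof -
  note A = assms
  have r0: "(0::complex)^2 - of_int r * 0 - of_int s = (0 - \<alpha>) * (0 - \<beta>)" using roots by blast
  have r1: "(1::complex)^2 - of_int r * 1 - of_int s = (1 - \<alpha>) * (1 - \<beta>)" using roots by blast
  have prod_ab: "\<alpha> * \<beta> = - of_int s" using r0 by simp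
  have sum_ab: "\<alpha> + \<beta> = of_int r" using r1 prod_ab by (simp add: algebra_simps)
  interpret L: lucas r s \<alpha> \<beta> U V
    by unfold_locales (use A sum_ab prod_ab in auto)
  have p0: "p > 0" using \<open>prime p\<close> prime_gt_0_nat by blast
  have nd: "n0 * p^t dvd n" by fact
  have n: "n > 0" by fact
  have Unz: "U k \<noteq> 0" if "k > 0" for k using L.U_nz that .
  show ?thesis
  proof (intro conjI impI)
    assume n0e: "n0 = p^h"
    define m where "m = n div p^(t+1)"
    have pd: "p^(h+t) dvd n" using nd n0e by (simp add: power_add)
    have "p^(t+1) dvd p^(h+t)" using \<open>h \<ge> 1\<close> by (intro le_imp_power_dvd) simp
    then have pt: "p^(t+1) dvd n" using pd by (rule dvd_trans)
    have nm: "n = m * p^(t+1)" unfolding m_def using pt by simp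
    have m0: "m > 0" using nm n by (cases m) auto
    have mn: "m dvd n" using nm by simp
    define S where "S = prime_factors (U n)"
    have Sf: "finite S" "\<forall>q\<in>S. prime q" unfolding S_def by auto
    have S1: "\<forall>q\<in>S. q \<ge> 1" using Sf(2) prime_ge_1_int by blast
    have Sn: "prime_factors (U n) \<subseteq> S" unfolding S_def by simp
    have Sm: "prime_factors (U m) \<subseteq> S" unfolding S_def using PF_sub[OF Unz[OF n] L.U_dvd'[OF mn]] .
    have lnn: "ln \<bar>real_of_int (U n)\<bar> = (\<Sum>q\<in>S. real (multiplicity q (U n)) * ln (real_of_int q))"
      using ln_abs_sum[OF Unz[OF n] Sf(1) Sn Sf(2)] .
    have lnm: "ln \<bar>real_of_int (U m)\<bar> = (\<Sum>q\<in>S. real (multiplicity q (U m)) * ln (real_of_int q))"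
      using ln_abs_sum[OF Unz[OF m0] Sf(1) Sm Sf(2)] .
    have M: "Mfun n0 (U n) = (\<Sum>q\<in>{q\<in>S. [q = 1] (mod int n0) \<or> [q = - 1] (mod int n0)}. real (multiplicity q (U n)) * ln (real_of_int q))"
      using Mfun_S[OF Unz[OF n] Sf(1) Sn Sf(2)] .
    have "ln (cmod ((\<alpha>^n - \<beta>^n) / (\<alpha>^m - \<beta>^m))) = ln \<bar>real_of_int (U n)\<bar> - ln \<bar>real_of_int (U m)\<bar>"
      unfolding L.U_ratio[OF m0] cmod_ratio using Unz[OF n] Unz[OF m0] by (simp add: ln_div)
    also have "\<dots> = (\<Sum>q\<in>S. (real (multiplicity q (U n)) - real (multiplicity q (U m))) * ln (real_of_int q))"
      unfolding lnn lnm by (simp add: sum_subtractf left_diff_distrib)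
    also have "\<dots> \<le> (\<Sum>q\<in>{q\<in>S. [q = 1] (mod int n0) \<or> [q = - 1] (mod int n0)}. real (multiplicity q (U n)) * ln (real_of_int q))
                  + real (t+1) * ln (real_of_int (int p))"
    proof (rule combine[OF Sf(1) S1])
      show "\<forall>q\<in>S. ([q = 1] (mod int n0) \<or> [q = - 1] (mod int n0)) \<longrightarrow>
              real (multiplicity q (U n)) - real (multiplicity q (U m)) \<le> real (multiplicity q (U n))" by simp
      show "\<forall>q\<in>S. \<not> ([q = 1] (mod int n0) \<or> [q = - 1] (mod int n0)) \<longrightarrow>
              real (multiplicity q (U n)) - real (multiplicity q (U m)) \<le> (if q = int p then real (t+1) else 0)"
      proof (intro ballI impI)
        fix q assume q: "q \<in> S" and nb: "\<not> ([q = 1] (mod int n0) \<or> [q = - 1] (mod int n0))"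
        have "int (multiplicity q (U n)) - int (multiplicity q (U (n div p^(t+1)))) \<le> (if q = int p then int (t+1) else 0)"
          using L.partA[OF \<open>prime p\<close> \<open>h \<ge> 1\<close> _ pd n _ ] Sf(2) q nb n0e \<open>n0 > 4\<close> by simp
        then have "real_of_int (int (multiplicity q (U n)) - int (multiplicity q (U m))) \<le> real_of_int (if q = int p then int (t+1) else 0)"
          unfolding m_def by (simp only: of_int_le_iff)
        then show "real (multiplicity q (U n)) - real (multiplicity q (U m)) \<le> (if q = int p then real (t+1) else 0)"
          by (simp split: if_splits)
      qed
      show "0 \<le> real (t+1)" by simp
      show "1 \<le> int p" using p0 by simp
    qed
    finally show "Mfun n0 (U n) \<ge> ln (cmod ((\<alpha>^n - \<beta>^n) / (\<alpha>^(n div p^(t+1)) - \<beta>^(n div p^(t+1)))))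
                         - real (t+1) * ln (real p)" unfolding M m_def by simp
  next
    assume n0e: "n0 = p^h * p1^h1"
    define m where "m = n div p^(t+1)"
    define n' where "n' = n div p1"
    define m' where "m' = n div (p1 * p^(t+1))"
    have p10: "p1 > 0" using \<open>prime p1\<close> prime_gt_0_nat by blast
    have pne: "p \<noteq> p1" using \<open>p < p1\<close> by simp
    have a1: "p^h * p^t dvd n0 * p^t" using n0e by simp
    have "p^h * p^t dvd n" by (rule dvd_trans[OF a1 nd])
    then have pd: "p^(h+t) dvd n" by (simp add: power_add)
    have "p^(t+1) dvd p^(h+t)" using \<open>h \<ge> 1\<close> by (intro le_imp_power_dvd) simp
    then have pt: "p^(t+1) dvd n" using pd by (rule dvd_trans)
    have "p1 dvd n0" using n0e \<open>h1 \<ge> 1\<close> by (simp add: dvd_power dvd_mult)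
    then have p1n: "p1 dvd n" using dvd_trans[OF dvd_triv_left nd] by (rule dvd_trans)
    have "coprime p1 p" by (rule primes_coprime) (use \<open>prime p\<close> \<open>prime p1\<close> pne in auto)
    then have cop: "coprime p1 (p^(t+1))" by (simp add: coprime_power_right_iff)
    have pp: "p1 * p^(t+1) dvd n" using p1n pt cop by (simp add: divides_mult)
    have m0: "m > 0" "m dvd n" using div_pos_dvd[OF pt n] unfolding m_def by auto
    have n'0: "n' > 0" "n' dvd n" using div_pos_dvd[OF p1n n] unfolding n'_def by auto
    have m'0: "m' > 0" "m' dvd n" using div_pos_dvd[OF pp n] unfolding m'_def by auto
    have nm': "n = m' * (p1 * p^(t+1))" unfolding m'_def using pp by simp
    have mm': "m = m' * p1" unfolding m_def using nm' p0 by (simp add: ac_simps)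
    define P0 where "P0 = Pmax (n0 div gcd n0 3)"
    have P0v: "P0 = (if p1 = 3 \<and> h1 = 1 then p else p1)"
      unfolding P0_def n0e using Pmax_val[OF \<open>prime p\<close> \<open>prime p1\<close> \<open>p < p1\<close> \<open>h \<ge> 1\<close> \<open>h1 \<ge> 1\<close>] .
    have P01: "1 \<le> int P0" using P0v p0 p10 by simp
    define S where "S = prime_factors (U n)"
    have Sf: "finite S" "\<forall>q\<in>S. prime q" unfolding S_def by auto
    have S1: "\<forall>q\<in>S. q \<ge> 1" using Sf(2) prime_ge_1_int by blast
    have Sn: "prime_factors (U n) \<subseteq> S" unfolding S_def by simp
    have Sm: "prime_factors (U m) \<subseteq> S" unfolding S_def using PF_sub[OF Unz[OF n] L.U_dvd'[OF m0(2)]] .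
    have Sn': "prime_factors (U n') \<subseteq> S" unfolding S_def using PF_sub[OF Unz[OF n] L.U_dvd'[OF n'0(2)]] .
    have Sm': "prime_factors (U m') \<subseteq> S" unfolding S_def using PF_sub[OF Unz[OF n] L.U_dvd'[OF m'0(2)]] .
    have lnn: "ln \<bar>real_of_int (U n)\<bar> = (\<Sum>q\<in>S. real (multiplicity q (U n)) * ln (real_of_int q))"
      using ln_abs_sum[OF Unz[OF n] Sf(1) Sn Sf(2)] .
    have lnm: "ln \<bar>real_of_int (U m)\<bar> = (\<Sum>q\<in>S. real (multiplicity q (U m)) * ln (real_of_int q))"
      using ln_abs_sum[OF Unz[OF m0(1)] Sf(1) Sm Sf(2)] .
    have lnn': "ln \<bar>real_of_int (U n')\<bar> = (\<Sum>q\<in>S. real (multiplicity q (U n')) * ln (real_of_int q))"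
      using ln_abs_sum[OF Unz[OF n'0(1)] Sf(1) Sn' Sf(2)] .
    have lnm': "ln \<bar>real_of_int (U m')\<bar> = (\<Sum>q\<in>S. real (multiplicity q (U m')) * ln (real_of_int q))"
      using ln_abs_sum[OF Unz[OF m'0(1)] Sf(1) Sm' Sf(2)] .
    have M: "Mfun n0 (U n) = (\<Sum>q\<in>{q\<in>S. [q = 1] (mod int n0) \<or> [q = - 1] (mod int n0)}. real (multiplicity q (U n)) * ln (real_of_int q))"
      using Mfun_S[OF Unz[OF n] Sf(1) Sn Sf(2)] .
    have nz: "\<bar>real_of_int (U k)\<bar> > 0" if "k > 0" for k using Unz[OF that] by simp
    have "ln (cmod ((\<alpha>^n - \<beta>^n) / (\<alpha>^m - \<beta>^m)) * cmod ((\<alpha>^m' - \<beta>^m') / (\<alpha>^n' - \<beta>^n')))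
        = ln \<bar>real_of_int (U n)\<bar> - ln \<bar>real_of_int (U m)\<bar> + (ln \<bar>real_of_int (U m')\<bar> - ln \<bar>real_of_int (U n')\<bar>)"
      unfolding L.U_ratio[OF m0(1)] L.U_ratio[OF n'0(1)] cmod_ratio
      using nz[OF n] nz[OF m0(1)] nz[OF n'0(1)] nz[OF m'0(1)] by (simp add: ln_div ln_mult)
    also have "\<dots> = (\<Sum>q\<in>S. (real (multiplicity q (U n)) - real (multiplicity q (U m)) - real (multiplicity q (U n')) + real (multiplicity q (U m'))) * ln (real_of_int q))"
      unfolding lnn lnm lnn' lnm' by (simp add: sum_subtractf sum.distrib algebra_simps)
    also have "\<dots> \<le> (\<Sum>q\<in>{q\<in>S. [q = 1] (mod int n0) \<or> [q = - 1] (mod int n0)}. real (multiplicity q (U n)) * ln (real_of_int q))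
                  + real (t+1) * ln (real_of_int (int P0))"
    proof (rule combine[OF Sf(1) S1])
      show "\<forall>q\<in>S. ([q = 1] (mod int n0) \<or> [q = - 1] (mod int n0)) \<longrightarrow>
              real (multiplicity q (U n)) - real (multiplicity q (U m)) - real (multiplicity q (U n')) + real (multiplicity q (U m')) \<le> real (multiplicity q (U n))"
      proof (intro ballI impI)
        fix q assume "q \<in> S"
        have "multiplicity q (U m') \<le> multiplicity q (U m)"
          using L.U_dvd'[of m' m] mm' Unz[OF m0(1)] by (intro dvd_imp_multiplicity_le) auto
        then show "real (multiplicity q (U n)) - real (multiplicity q (U m)) - real (multiplicity q (U n')) + real (multiplicity q (U m')) \<le> real (multiplicity q (U n))"
          by simp
      qed
      show "\<forall>q\<in>S. \<not> ([q = 1] (mod int n0) \<or> [q = - 1] (mod int n0)) \<longrightarrow>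
              real (multiplicity q (U n)) - real (multiplicity q (U m)) - real (multiplicity q (U n')) + real (multiplicity q (U m')) \<le> (if q = int P0 then real (t+1) else 0)"
      proof (intro ballI impI)
        fix q assume q: "q \<in> S" and nb: "\<not> ([q = 1] (mod int n0) \<or> [q = - 1] (mod int n0))"
        have "int (multiplicity q (U n)) - int (multiplicity q (U m)) - int (multiplicity q (U n')) + int (multiplicity q (U m'))
              \<le> (if q = int P0 then int (t+1) else 0)"
          using L.partB[OF \<open>prime p\<close> \<open>prime p1\<close> \<open>p < p1\<close> \<open>h \<ge> 1\<close> \<open>h1 \<ge> 1\<close> n0e \<open>n0 > 4\<close> \<open>n0 \<notin> {6, 12}\<close> nd n, of q] Sf(2) q nb
          unfolding m_def n'_def m'_def P0v by simp
        then have "real_of_int (int (multiplicity q (U n)) - int (multiplicity q (U m)) - int (multiplicity q (U n')) + int (multiplicity q (U m')))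
              \<le> real_of_int (if q = int P0 then int (t+1) else 0)"
          by (simp only: of_int_le_iff)
        then show "real (multiplicity q (U n)) - real (multiplicity q (U m)) - real (multiplicity q (U n')) + real (multiplicity q (U m')) \<le> (if q = int P0 then real (t+1) else 0)"
          by (simp split: if_splits)
      qed
      show "0 \<le> real (t+1)" by simp
      show "1 \<le> int P0" by (rule P01)
    qed
    finally show "Mfun n0 (U n) \<ge> ln (cmod ((\<alpha>^n - \<beta>^n) / (\<alpha>^(n div p^(t+1)) - \<beta>^(n div p^(t+1))))
                            * cmod ((\<alpha>^(n div (p1 * p^(t+1))) - \<beta>^(n div (p1 * p^(t+1))))
                                    / (\<alpha>^(n div p1) - \<beta>^(n div p1))))
                         - real (t+1) * ln (real (Pmax (n0 div gcd n0 3)))"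
      unfolding M m_def[symmetric] n'_def[symmetric] m'_def[symmetric] P0_def[symmetric] by simp
  next
    assume c: "n0 = p^h \<and> p > 2"
    then have n0e: "n0 = p^h" and p2: "p > 2" by auto
    define m where "m = n div p^(t+1)"
    have pd: "p^(h+t) dvd n" using nd n0e by (simp add: power_add)
    have "p^(t+1) dvd p^(h+t)" using \<open>h \<ge> 1\<close> by (intro le_imp_power_dvd) simp
    then have pt: "p^(t+1) dvd n" using pd by (rule dvd_trans)
    have nm: "n = m * p^(t+1)" unfolding m_def using pt by simp
    have m0: "m > 0" using nm n by (cases m) auto
    have mn: "m dvd n" using nm by simp
    have n2: "2*n > 0" using n by simp
    define S where "S = prime_factors (U (2*n))"
    have Sf: "finite S" "\<forall>q\<in>S. prime q" unfolding S_def by auto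
    have S1: "\<forall>q\<in>S. q \<ge> 1" using Sf(2) prime_ge_1_int by blast
    have Vn: "V n dvd U (2*n)" using L.UV[of n] by simp
    have "V m dvd U (2*m)" using L.UV[of m] by simp
    moreover have "U (2*m) dvd U (2*n)" using L.U_dvd' mn by simp
    ultimately have Vm: "V m dvd U (2*n)" by (rule dvd_trans)
    have Sn: "prime_factors (V n) \<subseteq> S" unfolding S_def using PF_sub[OF Unz[OF n2] Vn] .
    have Sm: "prime_factors (V m) \<subseteq> S" unfolding S_def using PF_sub[OF Unz[OF n2] Vm] .
    have lnn: "ln \<bar>real_of_int (V n)\<bar> = (\<Sum>q\<in>S. real (multiplicity q (V n)) * ln (real_of_int q))"
      using ln_abs_sum[OF L.V_nz Sf(1) Sn Sf(2)] .
    have lnm: "ln \<bar>real_of_int (V m)\<bar> = (\<Sum>q\<in>S. real (multiplicity q (V m)) * ln (real_of_int q))"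
      using ln_abs_sum[OF L.V_nz Sf(1) Sm Sf(2)] .
    have M: "Mfun n0 (V n) = (\<Sum>q\<in>{q\<in>S. [q = 1] (mod int n0) \<or> [q = - 1] (mod int n0)}. real (multiplicity q (V n)) * ln (real_of_int q))"
      using Mfun_S[OF L.V_nz Sf(1) Sn Sf(2)] .
    have "ln (cmod ((\<alpha>^n + \<beta>^n) / (\<alpha>^m + \<beta>^m))) = ln \<bar>real_of_int (V n)\<bar> - ln \<bar>real_of_int (V m)\<bar>"
      unfolding L.V_ratio cmod_ratio using L.V_nz[of n] L.V_nz[of m] by (simp add: ln_div)
    also have "\<dots> = (\<Sum>q\<in>S. (real (multiplicity q (V n)) - real (multiplicity q (V m))) * ln (real_of_int q))"
      unfolding lnn lnm by (simp add: sum_subtractf left_diff_distrib)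
    also have "\<dots> \<le> (\<Sum>q\<in>{q\<in>S. [q = 1] (mod int n0) \<or> [q = - 1] (mod int n0)}. real (multiplicity q (V n)) * ln (real_of_int q))
                  + real (t+1) * ln (real_of_int (int p))"
    proof (rule combine[OF Sf(1) S1])
      show "\<forall>q\<in>S. ([q = 1] (mod int n0) \<or> [q = - 1] (mod int n0)) \<longrightarrow>
              real (multiplicity q (V n)) - real (multiplicity q (V m)) \<le> real (multiplicity q (V n))" by simp
      show "\<forall>q\<in>S. \<not> ([q = 1] (mod int n0) \<or> [q = - 1] (mod int n0)) \<longrightarrow>
              real (multiplicity q (V n)) - real (multiplicity q (V m)) \<le> (if q = int p then real (t+1) else 0)"
      proof (intro ballI impI)
        fix q assume q: "q \<in> S" and nb: "\<not> ([q = 1] (mod int n0) \<or> [q = - 1] (mod int n0))"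
        have pn2: "p \<noteq> 2" using p2 by simp
        have "int (multiplicity q (V n)) - int (multiplicity q (V (n div p^(t+1)))) \<le> (if q = int p then int (t+1) else 0)"
          using L.partC[OF \<open>prime p\<close> pn2 \<open>h \<ge> 1\<close> _ pd n _ ] Sf(2) q nb n0e \<open>n0 > 4\<close> by simp
        then have "real_of_int (int (multiplicity q (V n)) - int (multiplicity q (V m))) \<le> real_of_int (if q = int p then int (t+1) else 0)"
          unfolding m_def by (simp only: of_int_le_iff)
        then show "real (multiplicity q (V n)) - real (multiplicity q (V m)) \<le> (if q = int p then real (t+1) else 0)"
          by (simp split: if_splits)
      qed
      show "0 \<le> real (t+1)" by simp
      show "1 \<le> int p" using p0 by simp
    qed
    finally show "Mfun n0 (V n) \<ge> ln (cmod ((\<alpha>^n + \<beta>^n) / (\<alpha>^(n div p^(t+1)) + \<beta>^(n div p^(t+1)))))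
                         - real (t+1) * ln (real p)" unfolding M m_def by simp
  qed
qed


end
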